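(* Fix $\epsilon>0$, an integer $K\ge 0$ and a weight function $w:\mathbb{R}^{2d}\times\mathbb{R}^{2d}\to[0,\infty)$ such that $\sum_{z'\in\mathcal{S}_{a:b}(z)}w(z,z')>0$ for every $z$ satisfying (R) and all integers $a\le 0\le b$. Consider the following Markov kernel $P$ on $\mathbb{R}^{2d}$ from a current state $z^{\mathrm{curr}}$ satisfying (R): (i) sample $c$ uniformly from $\{0,1,\dots,K\}$ and set $a=-c$, $b=K-c$; (ii) propose $z^{\mathrm{prop}}\in\mathcal{S}_{a:b}(z^{\mathrm{curr}})$ with probability $w(z^{\mathrm{curr}},z^{\mathrm{prop}})/\sum_{z\in\mathcal{S}_{a:b}(z^{\mathrm{curr}})}w(z^{\mathrm{curr}},z)$; (iii) move to $z^{\mathrm{prop}}$ with probability $$\alpha=1\wedge\frac{\tilde\pi(z^{\mathrm{prop}})\,w(z^{\mathrm{prop}},z^{\mathrm{curr}})\sum_{z\in\mathcal{S}_{a:b}(z^{\mathrm{curr}})}w(z^{\mathrm{curr}},z)}{\tilde\pi(z^{\mathrm{curr}})\,w(z^{\mathrm{curr}},z^{\mathrm{prop}})\sum_{z\in\mathcal{S}_{a:b}(z^{\mathrm{curr}})}w(z^{\mathrm{prop}},z)},$$ otherwise stay at $z^{\mathrm{curr}}$. Assume (R) holds for $\tilde\pi$-almost every $z$. Then $P$ satisfies detailed balance with respect to $\tilde\pi$, i.e. $\tilde\pi(\mathrm{d}z)P(z,\mathrm{d}z')=\tilde\pi(\mathrm{d}z')P(z',\mathrm{d}z)$. The same conclusion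 holds for the modified kernel in which, for a fixed $\Delta>0$, the move is automatically rejected (the chain stays at $z^{\mathrm{curr}}$) whenever $\max_{z\in\mathcal{S}_{a:b}(z^{\mathrm{curr}})}H(z)-\min_{z\in\mathcal{S}_{a:b}(z^{\mathrm{curr}})}H(z)\ge\Delta$.
   Context: Let $U:\mathbb{R}^d\to\mathbb{R}$ be continuously differentiable with $\int e^{-U(x)}\,\mathrm{d}x=1$, $\pi(x)=e^{-U(x)}$, let $M$ be a symmetric positive-definite $d\times d$ matrix, $\rho$ the density of $\mathsf{N}(0,M)$, and $\tilde\pi(x,p)=\pi(x)\rho(p)=\exp\{-H(x,p)\}$ with $H(x,p)=U(x)+\tfrac12 p^\top M^{-1}p+\text{const}$. The leapfrog map $\mathsf{LF}_\epsilon:\mathbb{R}^{2d}\to\mathbb{R}^{2d}$ sends $(x,p)$ to $(x_1,p_1)$ where $p'=p-\tfrac{\epsilon}{2}\nabla U(x)$, $x_1=x+\epsilon M^{-1}p'$, $p_1=p'-\tfrac{\epsilon}{2}\nabla U(x_1)$; it is a bijection. For $z_0\in\mathbb{R}^{2d}$ define the orbit $z_l=(x_l,p_l)=\mathsf{LF}_\epsilon^{\,l}(z_0)$, $l\in\mathbb{Z}$, and $h_l=p_l^\top M^{-1}\nabla U(x_l)$. Condition (R) on $z_0$: $l\mapsto z_l$ is injective, $h_l\neq0$ for all $l$, and there are infinitely many $l\ge0$ and infinitely many $l<0$ with $h_l>0$ and $h_{l+1}<0$. An apogee lies between indices $l$ and $l+1$ iff $h_l>0$ and $h_{l+1}<0$.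 The apogees partition $\mathbb{Z}$ into maximal blocks of consecutive integers containing no apogee between consecutive members; the time-ordered list of orbit points indexed by such a block is a segment. $\mathcal{S}_0(z_0)$ is the segment containing index $0$, $\mathcal{S}_j(z_0)$ for $j>0$ ($j<0$) is the $j$-th segment after (the $|j|$-th segment before) it, and for integers $a\le b$, $\mathcal{S}_{a:b}(z_0)$ is the time-ordered concatenation of $\mathcal{S}_a(z_0),\dots,\mathcal{S}_b(z_0)$. For $z'$ in $\mathcal{S}_{a:b}(z_0)$, $\mathcal{S}_\#(z';z_0)$ denotes the integer $j$ with $z'\in\mathcal{S}_j(z_0)$. *)

theory Defs
  imports "HOL-Analysis.Analysis" "HOL-Probability.Probability"
begin

type_synonym 'n state = "(real^'n) \<times> (real^'n)"

definition LF :: "real \<Rightarrow> real^'n^'n \<Rightarrow> (real^'n \<Rightarrow> real^'n) \<Rightarrow> 'n state \<Rightarrow> 'n state" where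
  "LF eps M gradU z =
     (let x = fst z; p = snd z;
          p' = p - (eps / 2) *\<^sub>R gradU x;
          x1 = x + eps *\<^sub>R (matrix_inv M *v p');
          p1 = p' - (eps / 2) *\<^sub>R gradU x1
      in (x1, p1))"

definition orbit :: "real \<Rightarrow> real^'n^'n \<Rightarrow> (real^'n \<Rightarrow> real^'n) \<Rightarrow> 'n state \<Rightarrow> int \<Rightarrow> 'n state" where
  "orbit eps M gradU z0 l =
     (if 0 \<le> l then (LF eps M gradU ^^ nat l) z0
      else (inv (LF eps M gradU) ^^ nat (- l)) z0)"

definition hval :: "real \<Rightarrow> real^'n^'n \<Rightarrow> (real^'n \<Rightarrow> real^'n) \<Rightarrow> 'n state \<Rightarrow> int \<Rightarrow> real" where
  "hval eps M gradU z0 l =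
     (let z = orbit eps M gradU z0 l in snd z \<bullet> (matrix_inv M *v gradU (fst z)))"

text \<open>An apogee lies between indices l and l+1.\<close>
definition apogee :: "real \<Rightarrow> real^'n^'n \<Rightarrow> (real^'n \<Rightarrow> real^'n) \<Rightarrow> 'n state \<Rightarrow> int \<Rightarrow> bool" where
  "apogee eps M gradU z0 l \<longleftrightarrow> hval eps M gradU z0 l > 0 \<and> hval eps M gradU z0 (l + 1) < 0"

definition condR :: "real \<Rightarrow> real^'n^'n \<Rightarrow> (real^'n \<Rightarrow> real^'n) \<Rightarrow> 'n state \<Rightarrow> bool" where
  "condR eps M gradU z0 \<longleftrightarrow>
     inj (orbit eps M gradU z0) \<and> (\<forall>l. hval eps M gradU z0 l \<noteq> 0) \<and>
     infinite {l. 0 \<le> l \<and> apogee eps M gradU z0 l} \<and>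
     infinite {l. l < 0 \<and> apogee eps M gradU z0 l}"

text \<open>Index of the segment containing orbit index l: the signed number of apogees
  between index 0 and index l (so the segment containing 0 has index 0).\<close>
definition seg_index :: "real \<Rightarrow> real^'n^'n \<Rightarrow> (real^'n \<Rightarrow> real^'n) \<Rightarrow> 'n state \<Rightarrow> int \<Rightarrow> int" where
  "seg_index eps M gradU z0 l =
     (if 0 \<le> l then int (card {k. 0 \<le> k \<and> k < l \<and> apogee eps M gradU z0 k})
      else - int (card {k. l \<le> k \<and> k < 0 \<and> apogee eps M gradU z0 k}))"

definition segment :: "real \<Rightarrow> real^'n^'n \<Rightarrow> (real^'n \<Rightarrow> real^'n) \<Rightarrow> 'n state \<Rightarrow> int \<Rightarrow> 'n state set" where
  "segment eps M gradU z0 j = orbit eps M gradU z0 ` {l. seg_index eps M gradU z0 l = j}"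

definition segs :: "real \<Rightarrow> real^'n^'n \<Rightarrow> (real^'n \<Rightarrow> real^'n) \<Rightarrow> 'n state \<Rightarrow> int \<Rightarrow> int \<Rightarrow> 'n state set" where
  "segs eps M gradU z0 a b = (\<Union>j\<in>{a..b}. segment eps M gradU z0 j)"

definition rho :: "real^'n^'n \<Rightarrow> real^'n \<Rightarrow> real" where
  "rho M p = exp (- (p \<bullet> (matrix_inv M *v p)) / 2) / sqrt ((2 * pi) ^ CARD('n) * det M)"

definition pit :: "real^'n^'n \<Rightarrow> (real^'n \<Rightarrow> real) \<Rightarrow> 'n state \<Rightarrow> real" where
  "pit M U z = exp (- U (fst z)) * rho M (snd z)"

definition Ham :: "real^'n^'n \<Rightarrow> (real^'n \<Rightarrow> real) \<Rightarrow> 'n state \<Rightarrow> real" where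
  "Ham M U z = U (fst z) + (snd z \<bullet> (matrix_inv M *v snd z)) / 2
               + ln (sqrt ((2 * pi) ^ CARD('n) * det M))"

definition pit_measure :: "real^'n^'n \<Rightarrow> (real^'n \<Rightarrow> real) \<Rightarrow> 'n state measure" where
  "pit_measure M U = density lborel (\<lambda>z. ennreal (pit M U z))"

definition prop_pmf :: "('a \<Rightarrow> 'a \<Rightarrow> real) \<Rightarrow> 'a set \<Rightarrow> 'a \<Rightarrow> 'a pmf" where
  "prop_pmf w S z = embed_pmf (\<lambda>z'. if z' \<in> S then w z z' / (\<Sum>y\<in>S. w z y) else 0)"

definition accept_prob :: "real^'n^'n \<Rightarrow> (real^'n \<Rightarrow> real) \<Rightarrow> ('n state \<Rightarrow> 'n state \<Rightarrow> real)
    \<Rightarrow> 'n state set \<Rightarrow> 'n state \<Rightarrow> 'n state \<Rightarrow> real" where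
  "accept_prob M U w S z z' =
     min 1 ((pit M U z' * w z' z * (\<Sum>y\<in>S. w z y)) / (pit M U z * w z z' * (\<Sum>y\<in>S. w z' y)))"

definition mh_step :: "real^'n^'n \<Rightarrow> (real^'n \<Rightarrow> real) \<Rightarrow> ('n state \<Rightarrow> 'n state \<Rightarrow> real)
    \<Rightarrow> 'n state set \<Rightarrow> 'n state \<Rightarrow> 'n state pmf" where
  "mh_step M U w S z =
     bind_pmf (prop_pmf w S z) (\<lambda>z'.
     bind_pmf (bernoulli_pmf (accept_prob M U w S z z')) (\<lambda>acc.
     return_pmf (if acc then z' else z)))"

text \<open>The kernel P (states violating (R), a null set, are left fixed).\<close>
definition apogee_kernel :: "real \<Rightarrow> real^'n^'n \<Rightarrow> (real^'n \<Rightarrow> real) \<Rightarrow> (real^'n \<Rightarrow> real^'n)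
    \<Rightarrow> nat \<Rightarrow> ('n state \<Rightarrow> 'n state \<Rightarrow> real) \<Rightarrow> 'n state \<Rightarrow> 'n state pmf" where
  "apogee_kernel eps M U gradU K w z =
     (if condR eps M gradU z then
        bind_pmf (pmf_of_set {0..K}) (\<lambda>c.
          mh_step M U w (segs eps M gradU z (- int c) (int K - int c)) z)
      else return_pmf z)"

definition apogee_kernel_cutoff :: "real \<Rightarrow> real^'n^'n \<Rightarrow> (real^'n \<Rightarrow> real) \<Rightarrow> (real^'n \<Rightarrow> real^'n)
    \<Rightarrow> nat \<Rightarrow> ('n state \<Rightarrow> 'n state \<Rightarrow> real) \<Rightarrow> real \<Rightarrow> 'n state \<Rightarrow> 'n state pmf" where
  "apogee_kernel_cutoff eps M U gradU K w Delta z =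
     (if condR eps M gradU z then
        bind_pmf (pmf_of_set {0..K}) (\<lambda>c.
          (let S = segs eps M gradU z (- int c) (int K - int c) in
           if Max (Ham M U ` S) - Min (Ham M U ` S) \<ge> Delta then return_pmf z
           else mh_step M U w S z))
      else return_pmf z)"

definition detailed_balance :: "'a measure \<Rightarrow> ('a \<Rightarrow> 'a pmf) \<Rightarrow> bool" where
  "detailed_balance mu P \<longleftrightarrow>
     (\<forall>A\<in>sets mu. \<forall>B\<in>sets mu.
        (\<integral>\<^sup>+ z. indicator A z * emeasure (measure_pmf (P z)) B \<partial>mu) =
        (\<integral>\<^sup>+ z. indicator B z * emeasure (measure_pmf (P z)) A \<partial>mu))"

end

theory Submission
  imports Defs
begin


definition LFi :: "real \<Rightarrow> real^'n^'n \<Rightarrow> (real^'n \<Rightarrow> real^'n) \<Rightarrow> 'n state \<Rightarrow> 'n state" where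
  "LFi eps M gradU z =
     (let x1 = fst z; p1 = snd z;
          p' = p1 + (eps / 2) *\<^sub>R gradU x1;
          x = x1 - eps *\<^sub>R (matrix_inv M *v p');
          p = p' + (eps / 2) *\<^sub>R gradU x
      in (x, p))"

lemma LFi_LF: "LFi eps M gradU (LF eps M gradU z) = z"
  by (cases z) (simp add: LF_def LFi_def Let_def)

lemma LF_LFi: "LF eps M gradU (LFi eps M gradU z) = z"
  by (cases z) (simp add: LF_def LFi_def Let_def)

lemma bij_LF: "bij (LF eps M gradU)"
  by (metis LFi_LF LF_LFi bijI' )

lemma inv_LF: "inv (LF eps M gradU) = LFi eps M gradU"
  by (metis LFi_LF LF_LFi inv_equality)

lemma cont_LF: assumes "continuous_on UNIV gradU"
  shows "continuous_on UNIV (LF eps M gradU)"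
proof -
  have g: "continuous_on UNIV (\<lambda>z. gradU (f z))" if "continuous_on UNIV f" for f :: "'z::topological_space \<Rightarrow> _"
    using continuous_on_compose2[OF assms that] by auto
  show ?thesis unfolding LF_def Let_def
    by (intro continuous_intros g bounded_linear.continuous_on[OF matrix_vector_mul_bounded_linear])
qed

lemma cont_LFi: assumes "continuous_on UNIV gradU"
  shows "continuous_on UNIV (LFi eps M gradU)"
proof -
  have g: "continuous_on UNIV (\<lambda>z. gradU (f z))" if "continuous_on UNIV f" for f :: "'z::topological_space \<Rightarrow> _"
    using continuous_on_compose2[OF assms that] by auto
  show ?thesis unfolding LFi_def Let_def
    by (intro continuous_intros g bounded_linear.continuous_on[OF matrix_vector_mul_bounded_linear])
qed



lemma orbit_0[simp]: "orbit eps M gradU z 0 = z"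
  by (simp add: orbit_def)

lemma orbit_succ: "orbit eps M gradU z (l + 1) = LF eps M gradU (orbit eps M gradU z l)"
proof (cases "0 \<le> l")
  case True
  then have "nat (l+1) = Suc (nat l)" by simp
  then show ?thesis using True by (simp add: orbit_def)
next
  case False
  show ?thesis
  proof (cases "l = -1")
    case True
    then show ?thesis by (simp add: orbit_def inv_LF LF_LFi)
  next
    case F2: False
    then have "nat (-l) = Suc (nat (-(l+1)))" using False by simp
    then show ?thesis using False F2 by (simp add: orbit_def inv_LF LF_LFi)
  qed
qed

lemma orbit_pred: "orbit eps M gradU z (l - 1) = LFi eps M gradU (orbit eps M gradU z l)"
  using orbit_succ[of eps M gradU z "l - 1"] by (simp add: LFi_LF)

lemma orbit_add: "orbit eps M gradU (orbit eps M gradU z l) k = orbit eps M gradU z (k + l)"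
proof (induction k rule: int_induct[where k=0])
  case base
  then show ?case by simp
next
  case (step1 i)
  then show ?case using orbit_succ by (metis add.commute add.left_commute)
next
  case (step2 i)
  then show ?case using orbit_pred by (metis add.commute diff_add_eq)
qed

lemma cont_orbit: assumes "continuous_on UNIV gradU"
  shows "continuous_on UNIV (\<lambda>z. orbit eps M gradU z l)"
proof (induction l rule: int_induct[where k=0])
  case base
  then show ?case by (simp add: continuous_on_id)
next
  case (step1 i)
  then show ?case unfolding orbit_succ
    using continuous_on_compose2[OF cont_LF[OF assms] step1(2)] by auto
next
  case (step2 i)
  then show ?case unfolding orbit_pred
    using continuous_on_compose2[OF cont_LFi[OF assms] step2(2)] by auto
qed

lemma hval_shift: "hval eps M gradU (orbit eps M gradU z l) k = hval eps M gradU z (k + l)"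
  by (simp add: hval_def orbit_add)

lemma apogee_shift: "apogee eps M gradU (orbit eps M gradU z l) k = apogee eps M gradU z (k + l)"
  by (simp add: apogee_def hval_shift algebra_simps)



definition sidx :: "(int \<Rightarrow> bool) \<Rightarrow> int \<Rightarrow> int" where
  "sidx P l = (if 0 \<le> l then int (card {k. 0 \<le> k \<and> k < l \<and> P k})
      else - int (card {k. l \<le> k \<and> k < 0 \<and> P k}))"

lemma seg_index_sidx: "seg_index eps M gradU z = sidx (apogee eps M gradU z)"
  by (simp add: fun_eq_iff seg_index_def sidx_def)

lemma empty_int_aux[simp]: "{k::int. 0 \<le> k \<and> k < 0 \<and> P k} = {}" by auto

lemma sidx_0[simp]: "sidx P 0 = 0" by (simp add: sidx_def)

lemma sidx_nonpos: "l \<le> 0 \<Longrightarrow> sidx P l = - int (card {k. l \<le> k \<and> k < 0 \<and> P k})"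
  by (cases "l = 0") (auto simp: sidx_def)

lemma sidx_succ: "sidx P (l + 1) = sidx P l + (if P l then 1 else 0)"
proof (cases "0 \<le> l")
  case True
  have fin: "finite {k. 0 \<le> k \<and> k < l \<and> P k}"
    by (rule finite_subset[of _ "{0..<l}"]) auto
  have "{k. 0 \<le> k \<and> k < l + 1 \<and> P k} = {k. 0 \<le> k \<and> k < l \<and> P k} \<union> (if P l then {l} else {})"
    using True by (auto; smt (verit))
  then show ?thesis using True fin by (auto simp: sidx_def)
next
  case False
  have fin: "finite {k. l + 1 \<le> k \<and> k < 0 \<and> P k}"
    by (rule finite_subset[of _ "{l+1..<0}"]) auto
  have "{k. l \<le> k \<and> k < 0 \<and> P k} = {k. l + 1 \<le> k \<and> k < 0 \<and> P k} \<union> (if P l then {l} else {})"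
    using False by (auto; smt (verit))
  then show ?thesis using False fin sidx_nonpos[of l P] sidx_nonpos[of "l+1" P] by auto
qed

lemma sidx_pred: "sidx P (l - 1) = sidx P l - (if P (l - 1) then 1 else 0)"
  using sidx_succ[of P "l - 1"] by simp

lemma sidx_shift: "sidx (\<lambda>k. P (k + l)) k = sidx P (k + l) - sidx P l"
proof (induction k rule: int_induct[where k=0])
  case base
  then show ?case by simp
next
  case (step1 i)
  then show ?case using sidx_succ[of "\<lambda>k. P (k + l)" i] sidx_succ[of P "i + l"]
    by (simp add: algebra_simps)
next
  case (step2 i)
  then show ?case using sidx_pred[of "\<lambda>k. P (k + l)" i] sidx_pred[of P "i + l"]
    by (simp add: algebra_simps)
qed

lemma sidx_mono: "i \<le> j \<Longrightarrow> sidx P i \<le> sidx P j"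
proof (induction j rule: int_ge_induct)
  case base
  then show ?case by simp
next
  case (step j)
  then show ?case using sidx_succ[of P j] by simp
qed

lemma sidx_unbounded_above:
  assumes "infinite {l. 0 \<le> l \<and> P l}"
  shows "\<exists>N. sidx P N > b"
proof -
  obtain B where B: "B \<subseteq> {l. 0 \<le> l \<and> P l}" "finite B" "card B = nat (b + 1)"
    using infinite_arbitrarily_large[OF assms] by blast
  show ?thesis
  proof (cases "B = {}")
    case True
    then have "b + 1 \<le> 0" using B by simp
    then show ?thesis by (intro exI[of _ 0]) simp
  next
    case False
    define N where "N = Max B + 1"
    have N0: "0 \<le> N" using B(1) Max_in[OF B(2) False] unfolding N_def by auto
    have "B \<subseteq> {k. 0 \<le> k \<and> k < N \<and> P k}"
      using B Max_ge[of B] unfolding N_def by force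
    moreover have "finite {k. 0 \<le> k \<and> k < N \<and> P k}"
      by (rule finite_subset[of _ "{0..<N}"]) auto
    ultimately have "card B \<le> card {k. 0 \<le> k \<and> k < N \<and> P k}" by (rule card_mono[rotated])
    then have "sidx P N \<ge> int (card B)" using N0 by (simp add: sidx_def)
    then show ?thesis using B by (intro exI[of _ N]) (auto split: if_splits)
  qed
qed

lemma sidx_unbounded_below:
  assumes "infinite {l. l < 0 \<and> P l}"
  shows "\<exists>N. sidx P N < a"
proof -
  obtain B where B: "B \<subseteq> {l. l < 0 \<and> P l}" "finite B" "card B = nat (1 - a)"
    using infinite_arbitrarily_large[OF assms] by blast
  show ?thesis
  proof (cases "B = {}")
    case True
    then have "1 - a \<le> 0" using B by simp
    then show ?thesis by (intro exI[of _ 0]) simp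
  next
    case False
    define N where "N = Min B"
    have N0: "N \<le> 0" using B(1) Min_in[OF B(2) False] unfolding N_def by auto
    have "B \<subseteq> {k. N \<le> k \<and> k < 0 \<and> P k}"
      using B Min_le[of B] unfolding N_def by force
    moreover have "finite {k. N \<le> k \<and> k < 0 \<and> P k}"
      by (rule finite_subset[of _ "{N..<0}"]) auto
    ultimately have "card B \<le> card {k. N \<le> k \<and> k < 0 \<and> P k}" by (rule card_mono[rotated])
    then have "sidx P N \<le> - int (card B)" using N0 by (simp add: sidx_nonpos)
    then show ?thesis using B by (intro exI[of _ N]) (auto split: if_splits)
  qed
qed

lemma sidx_finite:
  assumes "infinite {l. 0 \<le> l \<and> P l}" "infinite {l. l < 0 \<and> P l}"
  shows "finite {l. a \<le> sidx P l \<and> sidx P l \<le> b}"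
proof -
  obtain N1 where N1: "sidx P N1 > b" using sidx_unbounded_above[OF assms(1)] by blast
  obtain N0 where N0: "sidx P N0 < a" using sidx_unbounded_below[OF assms(2)] by blast
  have "{l. a \<le> sidx P l \<and> sidx P l \<le> b} \<subseteq> {N0..N1}"
  proof
    fix l assume l: "l \<in> {l. a \<le> sidx P l \<and> sidx P l \<le> b}"
    have "N0 \<le> l" proof (rule ccontr)
      assume "\<not> N0 \<le> l" then have "sidx P l \<le> sidx P N0" by (intro sidx_mono) simp
      then show False using l N0 by simp
    qed
    moreover have "l \<le> N1" proof (rule ccontr)
      assume "\<not> l \<le> N1" then have "sidx P N1 \<le> sidx P l" by (intro sidx_mono) simp
      then show False using l N1 by simp
    qed
    ultimately show "l \<in> {N0..N1}" by simp
  qed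
  then show ?thesis by (rule finite_subset) simp
qed



lemma nn_integral_lborel_pair:
  fixes h :: "('a::euclidean_space \<times> 'b::euclidean_space) \<Rightarrow> ennreal"
  assumes [measurable]: "h \<in> borel_measurable borel"
  shows "(\<integral>\<^sup>+ z. h z \<partial>lborel) = (\<integral>\<^sup>+ x. \<integral>\<^sup>+ p. h (x, p) \<partial>lborel \<partial>lborel)"
proof -
  have "h \<in> borel_measurable (lborel \<Otimes>\<^sub>M lborel)"
    by (simp add: lborel_prod)
  then have "(\<integral>\<^sup>+ x. \<integral>\<^sup>+ p. h (x, p) \<partial>lborel \<partial>lborel) = integral\<^sup>N (lborel \<Otimes>\<^sub>M lborel) h"
    by (rule lborel.nn_integral_fst)
  then show ?thesis by (simp add: lborel_prod)
qed

lemma nn_integral_lborel_pair':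
  fixes h :: "('a::euclidean_space \<times> 'b::euclidean_space) \<Rightarrow> ennreal"
  assumes [measurable]: "h \<in> borel_measurable borel"
  shows "(\<integral>\<^sup>+ z. h z \<partial>lborel) = (\<integral>\<^sup>+ p. \<integral>\<^sup>+ x. h (x, p) \<partial>lborel \<partial>lborel)"
proof -
  have "h \<in> borel_measurable (lborel \<Otimes>\<^sub>M lborel)"
    by (simp add: lborel_prod)
  then have "(\<integral>\<^sup>+ p. \<integral>\<^sup>+ x. h (x, p) \<partial>lborel \<partial>lborel) = integral\<^sup>N (lborel \<Otimes>\<^sub>M lborel) h"
    by (rule lborel_pair.nn_integral_snd)
  then show ?thesis by (simp add: lborel_prod)
qed

lemma nn_integral_lborel_translate:
  fixes g :: "'a::euclidean_space \<Rightarrow> ennreal"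
  assumes [measurable]: "g \<in> borel_measurable borel"
  shows "(\<integral>\<^sup>+ p. g (c + p) \<partial>lborel) = (\<integral>\<^sup>+ p. g p \<partial>lborel)"
proof -
  have "(\<integral>\<^sup>+ p. g p \<partial>lborel) = (\<integral>\<^sup>+ p. g p \<partial>distr lborel borel ((+) c))"
    by (simp add: lborel_distr_plus)
  also have "\<dots> = (\<integral>\<^sup>+ p. g (c + p) \<partial>lborel)"
    by (subst nn_integral_distr) auto
  finally show ?thesis by simp
qed

lemma shear1:
  fixes f :: "'a::euclidean_space \<Rightarrow> 'b::euclidean_space"
  assumes "continuous_on UNIV f"
  shows "distr lborel borel (\<lambda>z. (fst z, snd z + f (fst z))) = lborel"
proof -
  have [measurable]: "f \<in> borel_measurable borel"
    using assms by (rule borel_measurable_continuous_onI)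
  have [measurable]: "(\<lambda>z. (fst z, snd z + f (fst z))) \<in> borel_measurable borel"
    by (intro borel_measurable_continuous_onI continuous_intros continuous_on_compose2[OF assms]) auto
  show ?thesis
  proof (rule measure_eqI)
    fix A :: "('a \<times> 'b) set" assume "A \<in> sets (distr lborel borel (\<lambda>z. (fst z, snd z + f (fst z))))"
    then have [measurable]: "A \<in> sets borel" by simp
    have "emeasure (distr lborel borel (\<lambda>z. (fst z, snd z + f (fst z)))) A
        = (\<integral>\<^sup>+ z. indicator A z \<partial>distr lborel borel (\<lambda>z. (fst z, snd z + f (fst z))))"
      by (simp add: nn_integral_indicator)
    also have "\<dots> = (\<integral>\<^sup>+ z. indicator A (fst z, snd z + f (fst z)) \<partial>lborel)"
      by (subst nn_integral_distr) auto
    also have "\<dots> = (\<integral>\<^sup>+ x. \<integral>\<^sup>+ p. indicator A (x, p + f x) \<partial>lborel \<partial>lborel)"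
      by (subst nn_integral_lborel_pair) auto
    also have "\<dots> = (\<integral>\<^sup>+ x. \<integral>\<^sup>+ p. indicator A (x, p) \<partial>lborel \<partial>lborel)"
    proof (rule nn_integral_cong)
      fix x :: 'a
      have "(\<lambda>p. (x, p)) \<in> borel_measurable borel"
        by (intro borel_measurable_continuous_onI continuous_intros)
      then have "(\<lambda>p. indicator A (x, p) :: ennreal) \<in> borel_measurable borel"
        by (rule measurable_compose) simp
      from nn_integral_lborel_translate[OF this, of "f x"]
      show "(\<integral>\<^sup>+ p. indicator A (x, p + f x) \<partial>lborel) = (\<integral>\<^sup>+ p. indicator A (x, p) \<partial>lborel)"
        by (simp add: add.commute)
    qed
    also have "\<dots> = (\<integral>\<^sup>+ z. indicator A z \<partial>lborel)"
      by (subst nn_integral_lborel_pair) auto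
    also have "\<dots> = emeasure lborel A"
      by simp
    finally show "emeasure (distr lborel borel (\<lambda>z. (fst z, snd z + f (fst z)))) A = emeasure lborel A" .
  qed simp
qed

lemma shear2:
  fixes f :: "'b::euclidean_space \<Rightarrow> 'a::euclidean_space"
  assumes "continuous_on UNIV f"
  shows "distr lborel borel (\<lambda>z. (fst z + f (snd z), snd z)) = lborel"
proof -
  have [measurable]: "f \<in> borel_measurable borel"
    using assms by (rule borel_measurable_continuous_onI)
  have [measurable]: "(\<lambda>z. (fst z + f (snd z), snd z)) \<in> borel_measurable borel"
    by (intro borel_measurable_continuous_onI continuous_intros continuous_on_compose2[OF assms]) auto
  show ?thesis
  proof (rule measure_eqI)
    fix A :: "('a \<times> 'b) set" assume "A \<in> sets (distr lborel borel (\<lambda>z. (fst z + f (snd z), snd z)))"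
    then have [measurable]: "A \<in> sets borel" by simp
    have "emeasure (distr lborel borel (\<lambda>z. (fst z + f (snd z), snd z))) A
        = (\<integral>\<^sup>+ z. indicator A z \<partial>distr lborel borel (\<lambda>z. (fst z + f (snd z), snd z)))"
      by (simp add: nn_integral_indicator)
    also have "\<dots> = (\<integral>\<^sup>+ z. indicator A (fst z + f (snd z), snd z) \<partial>lborel)"
      by (subst nn_integral_distr) auto
    also have "\<dots> = (\<integral>\<^sup>+ p. \<integral>\<^sup>+ x. indicator A (x + f p, p) \<partial>lborel \<partial>lborel)"
      by (subst nn_integral_lborel_pair') auto
    also have "\<dots> = (\<integral>\<^sup>+ p. \<integral>\<^sup>+ x. indicator A (x, p) \<partial>lborel \<partial>lborel)"
    proof (rule nn_integral_cong)
      fix p :: 'b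
      have "(\<lambda>x. (x, p)) \<in> borel_measurable borel"
        by (intro borel_measurable_continuous_onI continuous_intros)
      then have "(\<lambda>x. indicator A (x, p) :: ennreal) \<in> borel_measurable borel"
        by (rule measurable_compose) simp
      from nn_integral_lborel_translate[OF this, of "f p"]
      show "(\<integral>\<^sup>+ x. indicator A (x + f p, p) \<partial>lborel) = (\<integral>\<^sup>+ x. indicator A (x, p) \<partial>lborel)"
        by (simp add: add.commute)
    qed
    also have "\<dots> = (\<integral>\<^sup>+ z. indicator A z \<partial>lborel)"
      by (subst nn_integral_lborel_pair') auto
    also have "\<dots> = emeasure lborel A"
      by simp
    finally show "emeasure (distr lborel borel (\<lambda>z. (fst z + f (snd z), snd z))) A = emeasure lborel A" .
  qed simp
qed

lemma distr_comp_preserve: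
  assumes "distr lborel borel T = lborel" "distr lborel borel S = lborel"
    "T \<in> borel_measurable borel" "S \<in> borel_measurable borel"
  shows "distr lborel borel (\<lambda>z. S (T z)) = (lborel :: 'a::euclidean_space measure)"
proof -
  have "distr lborel borel (\<lambda>z. S (T z)) = distr (distr lborel borel T) borel S"
    using assms by (subst distr_distr) (auto simp: comp_def)
  then show ?thesis using assms by simp
qed



lemma LF_preserve:
  fixes gradU :: "real^'n \<Rightarrow> real^'n"
  assumes gc: "continuous_on UNIV gradU"
  shows "distr lborel borel (LF eps M gradU) = lborel"
proof -
  define S1 where "S1 = (\<lambda>z::'n state. (fst z, snd z + (- (eps/2)) *\<^sub>R gradU (fst z)))"
  define S2 where "S2 = (\<lambda>z::'n state. (fst z + eps *\<^sub>R (matrix_inv M *v snd z), snd z))"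
  have c1: "continuous_on UNIV (\<lambda>x. (- (eps/2)) *\<^sub>R gradU x)"
    by (intro continuous_intros gc)
  have c2: "continuous_on UNIV (\<lambda>p. eps *\<^sub>R (matrix_inv M *v p))"
    by (intro continuous_intros)
  have d1: "distr lborel borel S1 = lborel" unfolding S1_def by (rule shear1[OF c1])
  have d2: "distr lborel borel S2 = lborel" unfolding S2_def by (rule shear2[OF c2])
  have m1: "S1 \<in> borel_measurable borel" unfolding S1_def
    by (intro borel_measurable_continuous_onI continuous_intros continuous_on_compose2[OF c1]) auto
  have m2: "S2 \<in> borel_measurable borel" unfolding S2_def
    by (intro borel_measurable_continuous_onI continuous_intros continuous_on_compose2[OF c2]) auto
  have eq: "LF eps M gradU = (\<lambda>z. S1 (S2 (S1 z)))"
    by (auto simp: fun_eq_iff LF_def Let_def S1_def S2_def)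
  have "distr lborel borel (\<lambda>z. S2 (S1 z)) = lborel"
    by (rule distr_comp_preserve[OF d1 d2 m1 m2])
  moreover have "(\<lambda>z. S2 (S1 z)) \<in> borel_measurable borel" using m1 m2 by measurable
  ultimately show ?thesis unfolding eq
    using distr_comp_preserve[OF _ d1 _ m1, of "\<lambda>z. S2 (S1 z)"] by simp
qed

lemma LFi_preserve:
  fixes gradU :: "real^'n \<Rightarrow> real^'n"
  assumes gc: "continuous_on UNIV gradU"
  shows "distr lborel borel (LFi eps M gradU) = lborel"
proof -
  define S1 where "S1 = (\<lambda>z::'n state. (fst z, snd z + (eps/2) *\<^sub>R gradU (fst z)))"
  define S2 where "S2 = (\<lambda>z::'n state. (fst z + (- eps) *\<^sub>R (matrix_inv M *v snd z), snd z))"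
  have c1: "continuous_on UNIV (\<lambda>x. (eps/2) *\<^sub>R gradU x)"
    by (intro continuous_intros gc)
  have c2: "continuous_on UNIV (\<lambda>p. (- eps) *\<^sub>R (matrix_inv M *v p))"
    by (intro continuous_intros)
  have d1: "distr lborel borel S1 = lborel" unfolding S1_def by (rule shear1[OF c1])
  have d2: "distr lborel borel S2 = lborel" unfolding S2_def by (rule shear2[OF c2])
  have m1: "S1 \<in> borel_measurable borel" unfolding S1_def
    by (intro borel_measurable_continuous_onI continuous_intros continuous_on_compose2[OF c1]) auto
  have m2: "S2 \<in> borel_measurable borel" unfolding S2_def
    by (intro borel_measurable_continuous_onI continuous_intros continuous_on_compose2[OF c2]) auto
  have eq: "LFi eps M gradU = (\<lambda>z. S1 (S2 (S1 z)))"
    by (auto simp: fun_eq_iff LFi_def Let_def S1_def S2_def)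
  have "distr lborel borel (\<lambda>z. S2 (S1 z)) = lborel"
    by (rule distr_comp_preserve[OF d1 d2 m1 m2])
  moreover have "(\<lambda>z. S2 (S1 z)) \<in> borel_measurable borel" using m1 m2 by measurable
  ultimately show ?thesis unfolding eq
    using distr_comp_preserve[OF _ d1 _ m1, of "\<lambda>z. S2 (S1 z)"] by simp
qed

lemma orbit_measurable:
  assumes gc: "continuous_on UNIV gradU"
  shows "(\<lambda>z. orbit eps M gradU z l) \<in> borel_measurable borel"
  by (rule borel_measurable_continuous_onI[OF cont_orbit[OF gc]])

lemma orbit_preserve:
  assumes gc: "continuous_on UNIV gradU"
  shows "distr lborel borel (\<lambda>z. orbit eps M gradU z l) = lborel"
proof (induction l rule: int_induct[where k=0])
  case base
  then show ?case by (simp add: distr_id2)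
next
  case (step1 i)
  show ?case unfolding orbit_succ
    by (rule distr_comp_preserve[OF step1(2) LF_preserve[OF gc] orbit_measurable[OF gc]
          borel_measurable_continuous_onI[OF cont_LF[OF gc]]])
next
  case (step2 i)
  show ?case unfolding orbit_pred
    by (rule distr_comp_preserve[OF step2(2) LFi_preserve[OF gc] orbit_measurable[OF gc]
          borel_measurable_continuous_onI[OF cont_LFi[OF gc]]])
qed

lemma nn_integral_orbit:
  assumes gc: "continuous_on UNIV gradU" and h: "h \<in> borel_measurable borel"
  shows "(\<integral>\<^sup>+ z. h (orbit eps M gradU z l) \<partial>lborel) = (\<integral>\<^sup>+ z. h z \<partial>lborel)"
proof -
  have "(\<integral>\<^sup>+ z. h z \<partial>lborel) = (\<integral>\<^sup>+ z. h z \<partial>distr lborel borel (\<lambda>z. orbit eps M gradU z l))"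
    by (simp add: orbit_preserve[OF gc])
  also have "\<dots> = (\<integral>\<^sup>+ z. h (orbit eps M gradU z l) \<partial>lborel)"
    using h orbit_measurable[OF gc] by (subst nn_integral_distr) auto
  finally show ?thesis by simp
qed



lemma count_int_suminf:
  "(\<integral>\<^sup>+ l. g l \<partial>count_space (UNIV::int set)) = (\<Sum>n. g (from_nat_into (UNIV::int set) n))"
proof -
  have b: "bij_betw (from_nat_into (UNIV::int set)) UNIV UNIV"
    using bij_betw_from_nat_into[of "UNIV::int set"] by simp
  show ?thesis
    by (simp add: nn_integral_bij_count_space[symmetric, OF b] nn_integral_count_space_nat)
qed

lemma borel_measurable_nn_integral_count_int:
  assumes "\<And>l. (\<lambda>z. f l z) \<in> borel_measurable M"
  shows "(\<lambda>z. \<integral>\<^sup>+ l. f l z \<partial>count_space (UNIV::int set)) \<in> borel_measurable M"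
  unfolding count_int_suminf using assms by measurable

lemma abstract_db:
  fixes T :: "'a::euclidean_space \<Rightarrow> int \<Rightarrow> 'a" and p :: "'a \<Rightarrow> ennreal"
    and m :: "int \<Rightarrow> 'a \<Rightarrow> ennreal" and P :: "'a \<Rightarrow> 'a pmf"
  assumes Tm[measurable]: "\<And>l. (\<lambda>z. T z l) \<in> borel_measurable borel"
    and Tp: "\<And>l h. h \<in> borel_measurable borel \<Longrightarrow> (\<integral>\<^sup>+ z. h (T z l) \<partial>lborel) = (\<integral>\<^sup>+ z. h z \<partial>lborel)"
    and Tinv: "\<And>z l. T (T z l) (- l) = z"
    and pm[measurable]: "p \<in> borel_measurable borel"
    and mm[measurable]: "\<And>l. m l \<in> borel_measurable borel"
    and sym: "\<And>z l. p z * m l z = p (T z l) * m (- l) (T z l)"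
    and PB: "\<And>z B. emeasure (measure_pmf (P z)) B = (\<integral>\<^sup>+ l. indicator B (T z l) * m l z \<partial>count_space UNIV)"
  shows "detailed_balance (density lborel p) P"
proof -
  define F where "F A B l = (\<integral>\<^sup>+ z. p z * indicator A z * indicator B (T z l) * m l z \<partial>lborel)" for A B l
  have L: "(\<integral>\<^sup>+ z. indicator A z * emeasure (measure_pmf (P z)) B \<partial>density lborel p)
       = (\<integral>\<^sup>+ l. F A B l \<partial>count_space UNIV)"
    if [measurable]: "A \<in> sets borel" "B \<in> sets borel" for A B
  proof -
    have "(\<integral>\<^sup>+ z. indicator A z * emeasure (measure_pmf (P z)) B \<partial>density lborel p)
        = (\<integral>\<^sup>+ z. p z * (indicator A z * emeasure (measure_pmf (P z)) B) \<partial>lborel)"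
    proof (subst nn_integral_density)
      show "(\<lambda>z. indicator A z * emeasure (measure_pmf (P z)) B) \<in> borel_measurable lborel"
      proof -
        have "(\<lambda>z. \<integral>\<^sup>+ l. indicator B (T z l) * m l z \<partial>count_space UNIV) \<in> borel_measurable borel"
          by (rule borel_measurable_nn_integral_count_int) measurable
        then show ?thesis by (simp add: PB)
      qed
    qed auto
    also have "\<dots> = (\<integral>\<^sup>+ z. \<integral>\<^sup>+ l. p z * indicator A z * indicator B (T z l) * m l z \<partial>count_space UNIV \<partial>lborel)"
      by (intro nn_integral_cong) (simp add: PB nn_integral_cmult[symmetric] mult.assoc)
    also have "\<dots> = (\<integral>\<^sup>+ l. F A B l \<partial>count_space UNIV)"
      unfolding F_def by (rule nn_integral_count_space_nn_integral) auto
    finally show ?thesis .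
  qed
  have FS: "F A B l = F B A (- l)" if [measurable]: "A \<in> sets borel" "B \<in> sets borel" for A B l
  proof -
    have "F B A (- l) = (\<integral>\<^sup>+ z. p (T z l) * indicator B (T z l) * indicator A (T (T z l) (- l)) * m (- l) (T z l) \<partial>lborel)"
      unfolding F_def by (rule Tp[symmetric]) measurable
    also have "\<dots> = F A B l" unfolding F_def
    proof (intro nn_integral_cong)
      fix z
      have "p (T z l) * indicator B (T z l) * indicator A (T (T z l) (- l)) * m (- l) (T z l)
          = (p (T z l) * m (- l) (T z l)) * (indicator B (T z l) * indicator A z)"
        by (simp only: Tinv ac_simps)
      also have "\<dots> = (p z * m l z) * (indicator B (T z l) * indicator A z)"
        by (simp only: sym[of z l])
      also have "\<dots> = p z * indicator A z * indicator B (T z l) * m l z"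
        by (simp only: ac_simps)
      finally show "p (T z l) * indicator B (T z l) * indicator A (T (T z l) (- l)) * m (- l) (T z l)
          = p z * indicator A z * indicator B (T z l) * m l z" .
    qed
    finally show ?thesis by simp
  qed
  show ?thesis unfolding detailed_balance_def
  proof (intro ballI)
    fix A B assume "A \<in> sets (density lborel p)" "B \<in> sets (density lborel p)"
    then have [measurable]: "A \<in> sets borel" "B \<in> sets borel" by auto
    have "(\<integral>\<^sup>+ l. F A B l \<partial>count_space UNIV) = (\<integral>\<^sup>+ l. F B A (- l) \<partial>count_space UNIV)"
      by (rule nn_integral_cong) (rule FS; simp)
    also have "\<dots> = (\<integral>\<^sup>+ l. F B A l \<partial>count_space UNIV)"
      by (rule nn_integral_bij_count_space) (auto intro: bij_betw_byWitness[where f'=uminus])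
    finally show "(\<integral>\<^sup>+ z. indicator A z * emeasure (measure_pmf (P z)) B \<partial>density lborel p)
       = (\<integral>\<^sup>+ z. indicator B z * emeasure (measure_pmf (P z)) A \<partial>density lborel p)"
      by (simp add: L)
  qed
qed



lemma pmf_prop:
  assumes "finite S" "(\<Sum>y\<in>S. w z y) > 0" "\<And>y. w z y \<ge> 0"
  shows "pmf (prop_pmf w S z) y = (if y \<in> S then w z y / (\<Sum>y\<in>S. w z y) else 0)"
  unfolding prop_pmf_def
proof (rule pmf_embed_pmf)
  show "\<And>x. 0 \<le> (if x \<in> S then w z x / (\<Sum>y\<in>S. w z y) else 0)"
    using assms by auto
  have "(\<integral>\<^sup>+ x. ennreal (if x \<in> S then w z x / (\<Sum>y\<in>S. w z y) else 0) \<partial>count_space UNIV)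
      = (\<integral>\<^sup>+ x. ennreal (w z x / (\<Sum>y\<in>S. w z y)) * indicator S x \<partial>count_space UNIV)"
    by (intro nn_integral_cong) (auto split: split_indicator)
  also have "\<dots> = (\<Sum>x\<in>S. ennreal (w z x / (\<Sum>y\<in>S. w z y)))"
    using assms(1) by (simp add: nn_integral_indicator_finite)
  also have "\<dots> = ennreal (\<Sum>x\<in>S. w z x / (\<Sum>y\<in>S. w z y))"
    using assms by (intro sum_ennreal) auto
  also have "(\<Sum>x\<in>S. w z x / (\<Sum>y\<in>S. w z y)) = 1"
    using assms by (simp add: sum_divide_distrib[symmetric])
  finally show "(\<integral>\<^sup>+ x. ennreal (if x \<in> S then w z x / (\<Sum>y\<in>S. w z y) else 0) \<partial>count_space UNIV) = 1"
    by simp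
qed

lemma set_pmf_prop:
  assumes "finite S" "(\<Sum>y\<in>S. w z y) > 0" "\<And>y. w z y \<ge> 0"
  shows "set_pmf (prop_pmf w S z) \<subseteq> S"
  using pmf_prop[where S=S and w=w and z=z, OF assms] by (auto simp: set_pmf_iff split: if_splits)

lemma set_pmf_mh:
  assumes "finite S" "(\<Sum>y\<in>S. w z y) > 0" "\<And>y. w z y \<ge> 0"
  shows "set_pmf (mh_step M U w S z) \<subseteq> insert z S"
  using set_pmf_prop[where S=S and w=w and z=z, OF assms] unfolding mh_step_def by (auto split: if_splits; blast)

lemma pmf_mh:
  assumes "finite S" "(\<Sum>y\<in>S. w z y) > 0" "\<And>y. w z y \<ge> 0" and yz: "y \<noteq> z"
    and a: "0 \<le> accept_prob M U w S z y" "accept_prob M U w S z y \<le> 1"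
  shows "pmf (mh_step M U w S z) y = pmf (prop_pmf w S z) y * accept_prob M U w S z y"
proof -
  let ?a = "accept_prob M U w S z"
  have inner: "pmf (bind_pmf (bernoulli_pmf (?a x)) (\<lambda>acc. return_pmf (if acc then x else z))) y
      = (if x = y then ?a y else 0)" for x
  proof (cases "x = y")
    case True
    then show ?thesis using a yz by (simp add: pmf_bind)
  next
    case False
    have "pmf (bind_pmf (bernoulli_pmf (?a x)) (\<lambda>acc. return_pmf (if acc then x else z))) y
        = (\<integral>acc. indicator {y} (if acc then x else z) \<partial>measure_pmf (bernoulli_pmf (?a x)))"
      by (simp add: pmf_bind)
    also have "\<dots> = (\<integral>acc. 0 \<partial>measure_pmf (bernoulli_pmf (?a x)))"
      using False yz by (intro Bochner_Integration.integral_cong) auto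
    finally show ?thesis using False by simp
  qed
  have "pmf (mh_step M U w S z) y = (\<integral>x. (if x = y then ?a y else 0) \<partial>measure_pmf (prop_pmf w S z))"
    unfolding mh_step_def pmf_bind[of "prop_pmf w S z"] inner ..
  also have "\<dots> = (\<integral>x. ?a y * indicator {y} x \<partial>measure_pmf (prop_pmf w S z))"
    by (intro Bochner_Integration.integral_cong) auto
  also have "\<dots> = ?a y * pmf (prop_pmf w S z) y"
    by (simp add: measure_pmf_single)
  finally show ?thesis by simp
qed



lemma inf_up: "infinite {k::int. 0 \<le> k \<and> Q k} \<longleftrightarrow> (\<forall>N. \<exists>k\<ge>N. Q k)"
proof
  assume "infinite {k::int. 0 \<le> k \<and> Q k}"
  then show "\<forall>N. \<exists>k\<ge>N. Q k"
    unfolding infinite_int_iff_unbounded_le by (metis abs_of_nonneg mem_Collect_eq)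
next
  assume a: "\<forall>N. \<exists>k\<ge>N. Q k"
  show "infinite {k::int. 0 \<le> k \<and> Q k}"
    unfolding infinite_int_iff_unbounded_le
  proof
    fix m :: int
    obtain k where "k \<ge> max m 0" "Q k" using a by blast
    then show "\<exists>n. m \<le> \<bar>n\<bar> \<and> n \<in> {k. 0 \<le> k \<and> Q k}" by (intro exI[of _ k]) auto
  qed
qed

lemma inf_down: "infinite {k::int. k < 0 \<and> Q k} \<longleftrightarrow> (\<forall>N. \<exists>k\<le>N. Q k)"
proof
  assume "infinite {k::int. k < 0 \<and> Q k}"
  then show "\<forall>N. \<exists>k\<le>N. Q k"
    unfolding infinite_int_iff_unbounded_le
    by (metis (no_types, lifting) abs_of_neg mem_Collect_eq neg_le_iff_le)
next
  assume a: "\<forall>N. \<exists>k\<le>N. Q k"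
  show "infinite {k::int. k < 0 \<and> Q k}"
    unfolding infinite_int_iff_unbounded_le
  proof
    fix m :: int
    obtain k where "k \<le> min (- m) (-1)" "Q k" using a by blast
    then show "\<exists>n. m \<le> \<bar>n\<bar> \<and> n \<in> {k. k < 0 \<and> Q k}" by (intro exI[of _ k]) auto
  qed
qed

lemma condR_alt: "condR eps M gradU z \<longleftrightarrow>
     inj (orbit eps M gradU z) \<and> (\<forall>l. hval eps M gradU z l \<noteq> 0) \<and>
     (\<forall>N. \<exists>k\<ge>N. apogee eps M gradU z k) \<and> (\<forall>N. \<exists>k\<le>N. apogee eps M gradU z k)"
  unfolding condR_def inf_up inf_down ..

lemma condR_shift: "condR eps M gradU (orbit eps M gradU z l) \<longleftrightarrow> condR eps M gradU z"
proof -
  have i: "inj (\<lambda>k. orbit eps M gradU z (k + l)) \<longleftrightarrow> inj (orbit eps M gradU z)"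
  proof
    assume "inj (\<lambda>k. orbit eps M gradU z (k + l))"
    then show "inj (orbit eps M gradU z)"
      unfolding inj_def by (metis diff_add_cancel)
  next
    assume "inj (orbit eps M gradU z)"
    then show "inj (\<lambda>k. orbit eps M gradU z (k + l))"
      unfolding inj_def by (metis add_right_cancel)
  qed
  have h: "(\<forall>k. hval eps M gradU z (k + l) \<noteq> 0) \<longleftrightarrow> (\<forall>k. hval eps M gradU z k \<noteq> 0)"
    by (metis diff_add_cancel)
  have u: "(\<forall>N. \<exists>k\<ge>N. apogee eps M gradU z (k + l)) \<longleftrightarrow> (\<forall>N. \<exists>k\<ge>N. apogee eps M gradU z k)"
    by (metis add.commute add_le_cancel_left diff_add_cancel le_add_diff_inverse)
  have d: "(\<forall>N. \<exists>k\<le>N. apogee eps M gradU z (k + l)) \<longleftrightarrow> (\<forall>N. \<exists>k\<le>N. apogee eps M gradU z k)"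
    by (metis add_le_cancel_right diff_add_cancel)
  show ?thesis unfolding condR_alt orbit_add hval_shift apogee_shift
    using i h u d by (simp add: orbit_add[abs_def])
qed

lemma seg_index_shift:
  "seg_index eps M gradU (orbit eps M gradU z l) k = seg_index eps M gradU z (k + l) - seg_index eps M gradU z l"
proof -
  have "apogee eps M gradU (orbit eps M gradU z l) = (\<lambda>k. apogee eps M gradU z (k + l))"
    by (simp add: fun_eq_iff apogee_shift)
  then show ?thesis by (simp add: seg_index_sidx sidx_shift)
qed

lemma seg_index_0[simp]: "seg_index eps M gradU z 0 = 0"
  by (simp add: seg_index_sidx)

lemma segs_alt: "segs eps M gradU z a b =
    orbit eps M gradU z ` {k. a \<le> seg_index eps M gradU z k \<and> seg_index eps M gradU z k \<le> b}"
  unfolding segs_def segment_def by auto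

lemma segs_finite: "condR eps M gradU z \<Longrightarrow>
    finite {k. a \<le> seg_index eps M gradU z k \<and> seg_index eps M gradU z k \<le> b}"
  unfolding condR_def seg_index_sidx by (intro sidx_finite) auto

lemma segs_finite': "condR eps M gradU z \<Longrightarrow> finite (segs eps M gradU z a b)"
  unfolding segs_alt using segs_finite by blast

lemma mem_segs: "condR eps M gradU z \<Longrightarrow>
    orbit eps M gradU z l \<in> segs eps M gradU z a b \<longleftrightarrow>
    a \<le> seg_index eps M gradU z l \<and> seg_index eps M gradU z l \<le> b"
  unfolding segs_alt condR_def by (auto dest: injD)

lemma segs_subset: "segs eps M gradU z a b \<subseteq> range (orbit eps M gradU z)"
  unfolding segs_alt by auto

lemma segs_shift: "segs eps M gradU (orbit eps M gradU z l) a b =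
    segs eps M gradU z (a + seg_index eps M gradU z l) (b + seg_index eps M gradU z l)"
proof -
  let ?s = "seg_index eps M gradU z"
  have "segs eps M gradU (orbit eps M gradU z l) a b
      = (\<lambda>k. orbit eps M gradU z (k + l)) ` {k. a \<le> ?s (k + l) - ?s l \<and> ?s (k + l) - ?s l \<le> b}"
    unfolding segs_alt seg_index_shift orbit_add ..
  also have "\<dots> = orbit eps M gradU z ` ((\<lambda>k. k + l) ` {k. a \<le> ?s (k + l) - ?s l \<and> ?s (k + l) - ?s l \<le> b})"
    by (simp add: image_image)
  also have "(\<lambda>k. k + l) ` {k. a \<le> ?s (k + l) - ?s l \<and> ?s (k + l) - ?s l \<le> b}
      = {m. a + ?s l \<le> ?s m \<and> ?s m \<le> b + ?s l}"
  proof (rule set_eqI, rule iffI)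
    fix m assume "m \<in> {m. a + ?s l \<le> ?s m \<and> ?s m \<le> b + ?s l}"
    then show "m \<in> (\<lambda>k. k + l) ` {k. a \<le> ?s (k + l) - ?s l \<and> ?s (k + l) - ?s l \<le> b}"
      by (intro image_eqI[of _ _ "m - l"]) auto
  qed auto
  finally show ?thesis unfolding segs_alt .
qed

lemma sum_segs: "condR eps M gradU z \<Longrightarrow>
    (\<Sum>y\<in>segs eps M gradU z a b. f y) =
    (\<Sum>k\<in>{k. a \<le> seg_index eps M gradU z k \<and> seg_index eps M gradU z k \<le> b}. f (orbit eps M gradU z k))"
  unfolding segs_alt condR_def
  by (subst sum.reindex) (auto intro: inj_on_subset)



definition Sc :: "real \<Rightarrow> real^'n^'n \<Rightarrow> (real^'n \<Rightarrow> real^'n) \<Rightarrow> nat \<Rightarrow> nat \<Rightarrow> 'n state \<Rightarrow> 'n state set" where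
  "Sc eps M gradU K c z = segs eps M gradU z (- int c) (int K - int c)"

definition gk :: "real \<Rightarrow> real^'n^'n \<Rightarrow> (real^'n \<Rightarrow> real) \<Rightarrow> (real^'n \<Rightarrow> real^'n)
    \<Rightarrow> nat \<Rightarrow> ('n state \<Rightarrow> 'n state \<Rightarrow> real) \<Rightarrow> ('n state set \<Rightarrow> bool) \<Rightarrow> 'n state \<Rightarrow> 'n state pmf" where
  "gk eps M U gradU K w ok z =
     (if condR eps M gradU z then
        bind_pmf (pmf_of_set {0..K}) (\<lambda>c.
          if ok (Sc eps M gradU K c z) then mh_step M U w (Sc eps M gradU K c z) z else return_pmf z)
      else return_pmf z)"

lemma kernel_gk: "apogee_kernel eps M U gradU K w = gk eps M U gradU K w (\<lambda>_. True)"
  by (simp add: fun_eq_iff apogee_kernel_def gk_def Sc_def)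

lemma if_neg_swap: "(if \<not> P then a else b) = (if P then b else a)" by simp

lemma kernel_cutoff_gk: "apogee_kernel_cutoff eps M U gradU K w Delta =
   gk eps M U gradU K w (\<lambda>S. \<not> (Delta \<le> Max (Ham M U ` S) - Min (Ham M U ` S)))"
  unfolding fun_eq_iff apogee_kernel_cutoff_def gk_def Sc_def Let_def by (auto intro!: bind_pmf_cong)

lemma core_sym:
  fixes p1 p2 w1 w2 W1 W2 :: real
  assumes "p1 > 0" "p2 > 0" "w1 \<ge> 0" "w2 \<ge> 0" "W1 > 0" "W2 > 0"
  shows "p1 * (w1 / W1) * min 1 (p2 * w2 * W1 / (p1 * w1 * W2))
       = p2 * (w2 / W2) * min 1 (p1 * w1 * W2 / (p2 * w2 * W1))"
proof -
  define a where "a = p1 * w1 / W1"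
  define b where "b = p2 * w2 / W2"
  have a0: "a \<ge> 0" "b \<ge> 0" using assms unfolding a_def b_def by auto
  have r1: "p2 * w2 * W1 / (p1 * w1 * W2) = b / a"
    using assms unfolding a_def b_def by (simp add: field_simps)
  have r2: "p1 * w1 * W2 / (p2 * w2 * W1) = a / b"
    using assms unfolding a_def b_def by (simp add: field_simps)
  have l: "p1 * (w1 / W1) = a" "p2 * (w2 / W2) = b" unfolding a_def b_def by simp_all
  have "a * min 1 (b / a) = min a b" if "a \<ge> 0" "b \<ge> 0" for a b :: real
  proof (cases "a = 0")
    case True then show ?thesis using that by simp
  next
    case False
    then have "a > 0" using that by simp
    then show ?thesis by (simp add: min_def field_simps)
  qed
  then show ?thesis unfolding r1 r2 l using a0 by (simp add: min.commute)
qed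

context
  fixes eps :: real and M :: "real^'n^'n" and U :: "real^'n \<Rightarrow> real" and gradU :: "real^'n \<Rightarrow> real^'n"
    and K :: nat and w :: "'n state \<Rightarrow> 'n state \<Rightarrow> real"
  assumes wn: "\<And>z z'. w z z' \<ge> 0"
    and wp: "\<And>z a b. condR eps M gradU z \<Longrightarrow> a \<le> 0 \<Longrightarrow> 0 \<le> b \<Longrightarrow> (\<Sum>z'\<in>segs eps M gradU z a b. w z z') > 0"
    and pp: "\<And>z. pit M U z > 0"
begin

lemma Sc_fin: "condR eps M gradU z \<Longrightarrow> finite (Sc eps M gradU K c z)"
  unfolding Sc_def by (rule segs_finite')

lemma Sc_W: "condR eps M gradU z \<Longrightarrow> c \<le> K \<Longrightarrow> (\<Sum>y\<in>Sc eps M gradU K c z. w z y) > 0"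
  unfolding Sc_def by (rule wp) auto

lemma Sc_sub: "Sc eps M gradU K c z \<subseteq> range (orbit eps M gradU z)"
  unfolding Sc_def by (rule segs_subset)

lemma accept_01: "0 \<le> accept_prob M U w S z y" "accept_prob M U w S z y \<le> 1"
proof -
  have "0 \<le> (pit M U y * w y z * (\<Sum>y\<in>S. w z y)) / (pit M U z * w z y * (\<Sum>x\<in>S. w y x))"
    using pp[THEN less_imp_le] wn by (intro divide_nonneg_nonneg mult_nonneg_nonneg sum_nonneg) auto
  then show "0 \<le> accept_prob M U w S z y" "accept_prob M U w S z y \<le> 1"
    unfolding accept_prob_def by auto
qed

lemma set_pmf_gk: "set_pmf (gk eps M U gradU K w ok z) \<subseteq> range (orbit eps M gradU z)"
proof (cases "condR eps M gradU z")
  case True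
  have H: "set_pmf (if ok (Sc eps M gradU K c z) then mh_step M U w (Sc eps M gradU K c z) z else return_pmf z)
        \<subseteq> range (orbit eps M gradU z)" if "c \<le> K" for c
  proof -
    have "set_pmf (mh_step M U w (Sc eps M gradU K c z) z) \<subseteq> insert z (Sc eps M gradU K c z)"
      using Sc_fin[OF True] Sc_W[OF True that] wn by (intro set_pmf_mh)
    moreover have "z \<in> range (orbit eps M gradU z)" by (metis orbit_0 rangeI)
    ultimately show ?thesis using Sc_sub[of c z] by auto
  qed
  show ?thesis using True H by (fastforce simp: gk_def)
next
  case False
  then show ?thesis by (auto simp: gk_def intro: range_eqI[of _ _ 0])
qed

lemma pmf_gk:
  assumes R: "condR eps M gradU z" and yz: "y \<noteq> z"
  shows "pmf (gk eps M U gradU K w ok z) y =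
    (\<Sum>c\<in>{0..K}. if ok (Sc eps M gradU K c z) then
        pmf (prop_pmf w (Sc eps M gradU K c z) z) y * accept_prob M U w (Sc eps M gradU K c z) z y else 0)
    / real (Suc K)"
proof -
  have "pmf (gk eps M U gradU K w ok z) y =
     (\<Sum>c\<in>{0..K}. pmf (if ok (Sc eps M gradU K c z) then mh_step M U w (Sc eps M gradU K c z) z else return_pmf z) y)
      / real (card {0..K})"
    using R by (simp add: gk_def pmf_bind integral_pmf_of_set)
  also have "\<dots> = (\<Sum>c\<in>{0..K}. if ok (Sc eps M gradU K c z) then
        pmf (prop_pmf w (Sc eps M gradU K c z) z) y * accept_prob M U w (Sc eps M gradU K c z) z y else 0)
    / real (Suc K)"
    using yz by (intro arg_cong2[where f="(/)"] sum.cong)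
       (auto simp: pmf_mh[OF Sc_fin[OF R] Sc_W[OF R] wn yz accept_01])
  finally show ?thesis .
qed

end



context
  fixes eps :: real and M :: "real^'n^'n" and U :: "real^'n \<Rightarrow> real" and gradU :: "real^'n \<Rightarrow> real^'n"
    and K :: nat and w :: "'n state \<Rightarrow> 'n state \<Rightarrow> real"
  assumes wn: "\<And>z z'. w z z' \<ge> 0"
    and wp: "\<And>z a b. condR eps M gradU z \<Longrightarrow> a \<le> 0 \<Longrightarrow> 0 \<le> b \<Longrightarrow> (\<Sum>z'\<in>segs eps M gradU z a b. w z z') > 0"
    and pp: "\<And>z. pit M U z > 0"
begin

lemma sym_main:
  assumes R: "condR eps M gradU z" and l0: "l \<noteq> 0"
  shows "pit M U z * pmf (gk eps M U gradU K w ok z) (orbit eps M gradU z l)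
       = pit M U (orbit eps M gradU z l) * pmf (gk eps M U gradU K w ok (orbit eps M gradU z l)) z"
proof -
  define z' where "z' = orbit eps M gradU z l"
  define j where "j = seg_index eps M gradU z l"
  let ?S = "\<lambda>c x. Sc eps M gradU K c x"
  have R': "condR eps M gradU z'" unfolding z'_def condR_shift by (rule R)
  have injz: "inj (orbit eps M gradU z)" using R unfolding condR_def by simp
  have zne: "z' \<noteq> z" unfolding z'_def using injz l0 by (metis injD orbit_0)
  have zback: "orbit eps M gradU z' (- l) = z" unfolding z'_def orbit_add by simp
  have jback: "seg_index eps M gradU z' (- l) = - j"
    unfolding z'_def j_def seg_index_shift by simp
  define F where "F c = (if ok (?S c z) then
        pmf (prop_pmf w (?S c z) z) z' * accept_prob M U w (?S c z) z z' else 0)" for c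
  define G where "G c = (if ok (?S c z') then
        pmf (prop_pmf w (?S c z') z') z * accept_prob M U w (?S c z') z' z else 0)" for c
  define C where "C = {c\<in>{0..K}. - int c \<le> j \<and> j \<le> int K - int c}"
  define C' where "C' = {c\<in>{0..K}. - int c \<le> - j \<and> - j \<le> int K - int c}"
  have L: "pmf (gk eps M U gradU K w ok z) z' = (\<Sum>c\<in>{0..K}. F c) / real (Suc K)"
    unfolding F_def using pmf_gk[OF wn wp pp R zne] by simp
  have Rr: "pmf (gk eps M U gradU K w ok z') z = (\<Sum>c\<in>{0..K}. G c) / real (Suc K)"
    unfolding G_def using pmf_gk[OF wn wp pp R' zne[symmetric]] by simp
  have memz': "z' \<in> ?S c z \<longleftrightarrow> - int c \<le> j \<and> j \<le> int K - int c" for c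
    unfolding Sc_def z'_def j_def using mem_segs[OF R] by simp
  have memz: "z \<in> ?S c z' \<longleftrightarrow> - int c \<le> - j \<and> - j \<le> int K - int c" for c
    unfolding Sc_def using mem_segs[OF R', of "- l"] zback jback by simp
  have F0: "F c = 0" if "c \<in> {0..K} - C" for c
  proof -
    have "z' \<notin> ?S c z" using that memz' unfolding C_def by auto
    then show ?thesis unfolding F_def
      using pmf_prop[where S="?S c z" and w=w and z=z, OF Sc_fin[OF wn wp pp R] Sc_W[OF wn wp pp R] wn] that by auto
  qed
  have G0: "G c = 0" if "c \<in> {0..K} - C'" for c
  proof -
    have "z \<notin> ?S c z'" using that memz unfolding C'_def by auto
    then show ?thesis unfolding G_def
      using pmf_prop[where S="?S c z'" and w=w and z=z', OF Sc_fin[OF wn wp pp R'] Sc_W[OF wn wp pp R'] wn] that by auto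
  qed
  have s1: "(\<Sum>c\<in>{0..K}. pit M U z * F c) = (\<Sum>c\<in>C. pit M U z * F c)"
    by (rule sum.mono_neutral_right) (auto simp: C_def F0)
  have s2: "(\<Sum>c\<in>{0..K}. pit M U z' * G c) = (\<Sum>c\<in>C'. pit M U z' * G c)"
    by (rule sum.mono_neutral_right) (auto simp: C'_def G0)
  have s3: "(\<Sum>c\<in>C. pit M U z * F c) = (\<Sum>c\<in>C'. pit M U z' * G c)"
  proof (rule sum.reindex_bij_witness[where j="\<lambda>c. nat (int c + j)" and i="\<lambda>c. nat (int c - j)"])
    fix c assume c: "c \<in> C"
    show "nat (int (nat (int c + j)) - j) = c" using c unfolding C_def by auto
    show "nat (int c + j) \<in> C'" using c unfolding C_def C'_def by auto
    define c' where "c' = nat (int c + j)"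
    have cc': "int c' = int c + j" "c' \<le> K" using c unfolding C_def c'_def by auto
    have SS: "?S c' z' = ?S c z"
      unfolding Sc_def z'_def segs_shift using cc' j_def by (simp add: algebra_simps)
    let ?T = "?S c z"
    have c0: "c \<le> K" using c unfolding C_def by auto
    have W1: "(\<Sum>y\<in>?T. w z y) > 0" using Sc_W[OF wn wp pp R c0] .
    have W2: "(\<Sum>y\<in>?T. w z' y) > 0" using Sc_W[OF wn wp pp R' cc'(2)] SS by simp
    have fin: "finite ?T" using Sc_fin[OF wn wp pp R] .
    have inz': "z' \<in> ?T" using memz' c unfolding C_def by auto
    have inz: "z \<in> ?T" using memz[of c'] cc' SS c0 by auto
    have p1: "pmf (prop_pmf w ?T z) z' = w z z' / (\<Sum>y\<in>?T. w z y)"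
      using pmf_prop[where S="?T" and w=w and z=z, OF fin W1 wn] inz' by simp
    have p2: "pmf (prop_pmf w ?T z') z = w z' z / (\<Sum>y\<in>?T. w z' y)"
      using pmf_prop[where S="?T" and w=w and z=z', OF fin W2 wn] inz by simp
    have core: "pit M U z * (w z z' / (\<Sum>y\<in>?T. w z y)) * accept_prob M U w ?T z z'
        = pit M U z' * (w z' z / (\<Sum>y\<in>?T. w z' y)) * accept_prob M U w ?T z' z"
      unfolding accept_prob_def by (rule core_sym[OF pp pp wn wn W1 W2])
    show "pit M U z' * G (nat (int c + j)) = pit M U z * F c"
      unfolding G_def F_def c'_def[symmetric] SS p1 p2 using core by (simp add: mult.assoc)
  next
    fix c assume c: "c \<in> C'"
    show "nat (int (nat (int c - j)) + j) = c" using c unfolding C'_def by auto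
    show "nat (int c - j) \<in> C" using c unfolding C_def C'_def by auto
  qed
  have "pit M U z * pmf (gk eps M U gradU K w ok z) z' = (\<Sum>c\<in>{0..K}. pit M U z * F c) / real (Suc K)"
    unfolding L by (simp add: sum_distrib_left)
  also have "\<dots> = (\<Sum>c\<in>{0..K}. pit M U z' * G c) / real (Suc K)"
    using s1 s2 s3 by simp
  also have "\<dots> = pit M U z' * pmf (gk eps M U gradU K w ok z') z"
    unfolding Rr by (simp add: sum_distrib_left)
  finally show ?thesis unfolding z'_def .
qed

end



definition mfun :: "real \<Rightarrow> real^'n^'n \<Rightarrow> (real^'n \<Rightarrow> real) \<Rightarrow> (real^'n \<Rightarrow> real^'n)
    \<Rightarrow> nat \<Rightarrow> ('n state \<Rightarrow> 'n state \<Rightarrow> real) \<Rightarrow> ('n state set \<Rightarrow> bool) \<Rightarrow> int \<Rightarrow> 'n state \<Rightarrow> ennreal" where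
  "mfun eps M U gradU K w ok l z = (if condR eps M gradU z
      then ennreal (pmf (gk eps M U gradU K w ok z) (orbit eps M gradU z l))
      else (if l = 0 then 1 else 0))"

context
  fixes eps :: real and M :: "real^'n^'n" and U :: "real^'n \<Rightarrow> real" and gradU :: "real^'n \<Rightarrow> real^'n"
    and K :: nat and w :: "'n state \<Rightarrow> 'n state \<Rightarrow> real"
  assumes wn: "\<And>z z'. w z z' \<ge> 0"
    and wp: "\<And>z a b. condR eps M gradU z \<Longrightarrow> a \<le> 0 \<Longrightarrow> 0 \<le> b \<Longrightarrow> (\<Sum>z'\<in>segs eps M gradU z a b. w z z') > 0"
    and pp: "\<And>z. pit M U z > 0"
begin

lemma PB: "emeasure (measure_pmf (gk eps M U gradU K w ok z)) B
   = (\<integral>\<^sup>+ l. indicator B (orbit eps M gradU z l) * mfun eps M U gradU K w ok l z \<partial>count_space UNIV)"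
proof (cases "condR eps M gradU z")
  case True
  let ?p = "gk eps M U gradU K w ok z"
  let ?o = "orbit eps M gradU z"
  have inj: "inj ?o" using True unfolding condR_def by simp
  have "emeasure (measure_pmf ?p) B = (\<integral>\<^sup>+ x. indicator B x \<partial>measure_pmf ?p)"
    by simp
  also have "\<dots> = (\<integral>\<^sup>+ x. ennreal (pmf ?p x) * indicator B x \<partial>count_space UNIV)"
    by (rule nn_integral_measure_pmf)
  also have "\<dots> = (\<integral>\<^sup>+ x. ennreal (pmf ?p x) * indicator B x \<partial>count_space (range ?o))"
  proof (rule nn_integral_count_space_eq)
    fix x assume "x \<in> UNIV - range ?o"
    then have "x \<notin> set_pmf ?p" using set_pmf_gk[OF wn wp pp, where K=K and ok=ok and z=z] by auto
    then show "ennreal (pmf ?p x) * indicator B x = 0" by (simp add: set_pmf_iff)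
  qed auto
  also have "\<dots> = (\<integral>\<^sup>+ l. ennreal (pmf ?p (?o l)) * indicator B (?o l) \<partial>count_space UNIV)"
    by (rule nn_integral_bij_count_space[symmetric]) (use inj in \<open>simp add: bij_betw_def\<close>)
  also have "\<dots> = (\<integral>\<^sup>+ l. indicator B (orbit eps M gradU z l) * mfun eps M U gradU K w ok l z \<partial>count_space UNIV)"
    using True by (simp add: mfun_def mult.commute)
  finally show ?thesis .
next
  case False
  have "(\<integral>\<^sup>+ l. indicator B (orbit eps M gradU z l) * mfun eps M U gradU K w ok l z \<partial>count_space UNIV)
      = (\<integral>\<^sup>+ l. indicator B z * indicator {0::int} l \<partial>count_space UNIV)"
    using False by (intro nn_integral_cong) (auto simp: mfun_def split: split_indicator)
  also have "\<dots> = indicator B z"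
    by (subst nn_integral_cmult_indicator) auto
  finally show ?thesis using False by (simp add: gk_def)
qed

lemma sym_enn: "ennreal (pit M U z) * mfun eps M U gradU K w ok l z
    = ennreal (pit M U (orbit eps M gradU z l)) * mfun eps M U gradU K w ok (- l) (orbit eps M gradU z l)"
proof -
  have zback: "orbit eps M gradU (orbit eps M gradU z l) (- l) = z" by (simp add: orbit_add)
  consider "l = 0" | "l \<noteq> 0" "condR eps M gradU z" | "\<not> condR eps M gradU z" by blast
  then show ?thesis
  proof cases
    case 1 then show ?thesis by simp
  next
    case 2
    have R': "condR eps M gradU (orbit eps M gradU z l)" using 2 by (simp add: condR_shift)
    have "ennreal (pit M U z) * mfun eps M U gradU K w ok l z
        = ennreal (pit M U z * pmf (gk eps M U gradU K w ok z) (orbit eps M gradU z l))"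
      using 2 pp[THEN less_imp_le] by (simp add: mfun_def ennreal_mult)
    also have "\<dots> = ennreal (pit M U (orbit eps M gradU z l) * pmf (gk eps M U gradU K w ok (orbit eps M gradU z l)) z)"
      using sym_main[OF wn wp pp 2(2,1)] by simp
    also have "\<dots> = ennreal (pit M U (orbit eps M gradU z l)) * mfun eps M U gradU K w ok (- l) (orbit eps M gradU z l)"
      using R' pp[THEN less_imp_le] by (simp add: mfun_def zback ennreal_mult)
    finally show ?thesis .
  next
    case 3
    then have "\<not> condR eps M gradU (orbit eps M gradU z l)" by (simp add: condR_shift)
    then show ?thesis using 3 by (auto simp: mfun_def)
  qed
qed

end



lemma seg_index_real:
  "real_of_int (seg_index eps M gradU z k) =
    (if 0 \<le> k then (\<Sum>i\<in>{0..<k}. of_bool (apogee eps M gradU z i))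
     else - (\<Sum>i\<in>{k..<0}. of_bool (apogee eps M gradU z i)))"
proof -
  have "{0..<k} \<inter> {i. apogee eps M gradU z i} = {i. 0 \<le> i \<and> i < k \<and> apogee eps M gradU z i}" by auto
  moreover have "{k..<0} \<inter> {i. apogee eps M gradU z i} = {i. k \<le> i \<and> i < 0 \<and> apogee eps M gradU z i}" by auto
  ultimately show ?thesis by (simp add: seg_index_def)
qed

lemma meas_sum_I:
  fixes f :: "'a::topological_space \<Rightarrow> int \<Rightarrow> real"
  assumes R[measurable]: "Measurable.pred borel R"
    and Q[measurable]: "\<And>k. Measurable.pred borel (\<lambda>z. Q z k)"
    and f[measurable]: "\<And>k. (\<lambda>z. f z k) \<in> borel_measurable borel"
    and fin: "\<And>z. R z \<Longrightarrow> finite {k. Q z k}"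
  shows "(\<lambda>z. if R z then (\<Sum>k\<in>{k. Q z k}. f z k) else 0) \<in> borel_measurable borel"
proof (rule borel_measurable_LIMSEQ_real)
  define G where "G n z = (if R z then (\<Sum>k\<in>{- int n..int n}. if Q z k then f z k else 0) else 0)" for n z
  show "G n \<in> borel_measurable borel" for n unfolding G_def by measurable
  fix z
  show "(\<lambda>n. G n z) \<longlonglongrightarrow> (if R z then (\<Sum>k\<in>{k. Q z k}. f z k) else 0)"
  proof (cases "R z")
    case False then show ?thesis by (simp add: G_def)
  next
    case True
    have fz: "finite {k. Q z k}" using fin[OF True] .
    define N where "N = Max (insert 0 (abs ` {k. Q z k}))"
    have N: "\<bar>k\<bar> \<le> N" if "Q z k" for k
      unfolding N_def using fz that by (intro Max_ge) auto
    have "eventually (\<lambda>n. G n z = (if R z then (\<Sum>k\<in>{k. Q z k}. f z k) else 0)) sequentially"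
    proof (rule eventually_sequentiallyI[of "nat N"])
      fix n assume n: "nat N \<le> n"
      have e: "{k \<in> {- int n..int n}. Q z k} = {k. Q z k}" using N n by force
      have "(\<Sum>k\<in>{- int n..int n}. if Q z k then f z k else 0) = (\<Sum>k\<in>{k \<in> {- int n..int n}. Q z k}. f z k)"
        by (rule sum.inter_filter[symmetric]) simp
      then show "G n z = (if R z then (\<Sum>k\<in>{k. Q z k}. f z k) else 0)"
        using True e unfolding G_def by simp
    qed
    then show ?thesis by (rule tendsto_eventually)
  qed
qed

lemma meas_pair_w:
  assumes wm: "(\<lambda>(z, z'). w z z') \<in> borel_measurable borel"
    and f: "continuous_on UNIV f" and g: "continuous_on UNIV g"
  shows "(\<lambda>z. w (f z) (g z) :: real) \<in> borel_measurable borel"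
proof -
  have "(\<lambda>z. (f z, g z)) \<in> borel_measurable borel"
    by (intro borel_measurable_continuous_onI continuous_on_Pair f g)
  from measurable_compose[OF this wm] show ?thesis by simp
qed

context
  fixes eps :: real and M :: "real^'n^'n" and gradU :: "real^'n \<Rightarrow> real^'n"
  assumes gc: "continuous_on UNIV gradU"
begin

lemma orbit_meas[measurable]: "(\<lambda>z. orbit eps M gradU z l) \<in> borel_measurable borel"
  by (rule orbit_measurable[OF gc])

lemma hval_meas[measurable]: "(\<lambda>z. hval eps M gradU z l) \<in> borel_measurable borel"
proof -
  have "continuous_on UNIV (\<lambda>z. hval eps M gradU z l)"
    unfolding hval_def Let_def
    by (intro continuous_intros continuous_on_compose2[OF gc] cont_orbit[OF gc]
        bounded_linear.continuous_on[OF matrix_vector_mul_bounded_linear]) auto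
  then show ?thesis by (rule borel_measurable_continuous_onI)
qed

lemma apogee_meas[measurable]: "Measurable.pred borel (\<lambda>z. apogee eps M gradU z l)"
  unfolding apogee_def by measurable

lemma seg_index_meas[measurable]: "(\<lambda>z. real_of_int (seg_index eps M gradU z k)) \<in> borel_measurable borel"
  unfolding seg_index_real by measurable

lemma seg_cond_meas[measurable]:
  "Measurable.pred borel (\<lambda>z. a \<le> seg_index eps M gradU z k \<and> seg_index eps M gradU z k \<le> b)"
proof -
  have "(a \<le> seg_index eps M gradU z k \<and> seg_index eps M gradU z k \<le> b) \<longleftrightarrow>
     (real_of_int a \<le> real_of_int (seg_index eps M gradU z k) \<and> real_of_int (seg_index eps M gradU z k) \<le> real_of_int b)" for z
    by linarith
  then show ?thesis by (simp only:) measurable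
qed

lemma condR_meas[measurable]: "Measurable.pred borel (condR eps M gradU)"
proof -
  have i: "inj (orbit eps M gradU z) \<longleftrightarrow> (\<forall>k1 k2. k1 \<noteq> k2 \<longrightarrow> 0 < norm (orbit eps M gradU z k1 - orbit eps M gradU z k2))" for z
    unfolding inj_def by auto
  show ?thesis unfolding condR_alt i by measurable
qed

end



context
  fixes eps :: real and M :: "real^'n^'n" and U :: "real^'n \<Rightarrow> real" and gradU :: "real^'n \<Rightarrow> real^'n"
    and K :: nat and w :: "'n state \<Rightarrow> 'n state \<Rightarrow> real" and ok :: "'n state set \<Rightarrow> bool"
  assumes wn: "\<And>z z'. w z z' \<ge> 0"
    and wp: "\<And>z a b. condR eps M gradU z \<Longrightarrow> a \<le> 0 \<Longrightarrow> 0 \<le> b \<Longrightarrow> (\<Sum>z'\<in>segs eps M gradU z a b. w z z') > 0"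
    and pp: "\<And>z. pit M U z > 0"
    and gc: "continuous_on UNIV gradU"
    and wm: "(\<lambda>(z, z'). w z z') \<in> borel_measurable borel"
    and pc: "continuous_on UNIV (pit M U)"
    and okm: "\<And>c. Measurable.pred borel (\<lambda>z. condR eps M gradU z \<and> ok (Sc eps M gradU K c z))"
begin

lemma mfun_meas_ne:
  assumes l0: "l \<noteq> 0"
  shows "mfun eps M U gradU K w ok l \<in> borel_measurable borel"
proof -
  let ?R = "condR eps M gradU"
  let ?o = "orbit eps M gradU"
  define I where "I c z k = (- int c \<le> seg_index eps M gradU z k \<and> seg_index eps M gradU z k \<le> int K - int c)" for c z k
  define Wg where "Wg c z = (if ?R z then (\<Sum>k\<in>{k. I c z k}. w z (?o z k)) else 0)" for c z
  define Wg' where "Wg' c z = (if ?R z then (\<Sum>k\<in>{k. I c z k}. w (?o z l) (?o z k)) else 0)" for c z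
  note [measurable] = condR_meas[OF gc] okm orbit_meas[OF gc]
  have Im[measurable]: "Measurable.pred borel (\<lambda>z. I c z k)" for c k
    unfolding I_def by (rule seg_cond_meas[OF gc])
  have cI: "continuous_on UNIV (\<lambda>z. z)" by (rule continuous_on_id)
  have wm1[measurable]: "(\<lambda>z. w z (?o z k)) \<in> borel_measurable borel" for k
    by (rule meas_pair_w[OF wm cI cont_orbit[OF gc]])
  have wm2[measurable]: "(\<lambda>z. w (?o z k) z) \<in> borel_measurable borel" for k
    by (rule meas_pair_w[OF wm cont_orbit[OF gc] cI])
  have wm3[measurable]: "(\<lambda>z. w (?o z k1) (?o z k2)) \<in> borel_measurable borel" for k1 k2
    by (rule meas_pair_w[OF wm cont_orbit[OF gc] cont_orbit[OF gc]])
  have pm[measurable]: "pit M U \<in> borel_measurable borel"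
    by (rule borel_measurable_continuous_onI[OF pc])
  have pm2[measurable]: "(\<lambda>z. pit M U (?o z k)) \<in> borel_measurable borel" for k
    by measurable
  have fin: "?R z \<Longrightarrow> finite {k. I c z k}" for c z unfolding I_def by (rule segs_finite)
  have Wgm[measurable]: "Wg c \<in> borel_measurable borel" for c
    unfolding Wg_def by (rule meas_sum_I) (use fin in \<open>measurable\<close>)
  have Wgm'[measurable]: "Wg' c \<in> borel_measurable borel" for c
    unfolding Wg'_def by (rule meas_sum_I) (use fin in \<open>measurable\<close>)
  define E where "E z = (\<Sum>c\<in>{0..K}. if (?R z \<and> ok (Sc eps M gradU K c z)) \<and> I c z l then
      w z (?o z l) / Wg c z * min 1 (pit M U (?o z l) * w (?o z l) z * Wg c z / (pit M U z * w z (?o z l) * Wg' c z))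
      else 0) / real (Suc K)" for z
  have Em: "E \<in> borel_measurable borel" unfolding E_def by measurable
  have eq: "mfun eps M U gradU K w ok l z = (if ?R z then ennreal (E z) else 0)" for z
  proof (cases "?R z")
    case True
    have inj: "inj (?o z)" using True unfolding condR_def by simp
    have ne: "?o z l \<noteq> z" using inj l0 by (metis injD orbit_0)
    have "pmf (gk eps M U gradU K w ok z) (?o z l) = (\<Sum>c\<in>{0..K}. if ok (Sc eps M gradU K c z) then
        pmf (prop_pmf w (Sc eps M gradU K c z) z) (?o z l) * accept_prob M U w (Sc eps M gradU K c z) z (?o z l) else 0)
       / real (Suc K)"
      by (rule pmf_gk[OF wn wp pp True ne])
    also have "\<dots> = E z"
      unfolding E_def
    proof (intro arg_cong2[where f="(/)"] sum.cong refl)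
      fix c assume c: "c \<in> {0..K}"
      let ?S = "Sc eps M gradU K c z"
      have W: "(\<Sum>y\<in>?S. w z y) = Wg c z" "(\<Sum>y\<in>?S. w (?o z l) y) = Wg' c z"
        unfolding Sc_def Wg_def Wg'_def I_def using True by (simp_all add: sum_segs)
      have mem: "?o z l \<in> ?S \<longleftrightarrow> I c z l" unfolding Sc_def I_def using mem_segs[OF True] by simp
      have pr: "pmf (prop_pmf w ?S z) (?o z l) = (if I c z l then w z (?o z l) / Wg c z else 0)"
        using pmf_prop[where S="?S" and w=w and z=z, OF Sc_fin[OF wn wp pp True] Sc_W[OF wn wp pp True] wn] c W mem
        by simp
      show "(if ok ?S then pmf (prop_pmf w ?S z) (?o z l) * accept_prob M U w ?S z (?o z l) else 0) =
        (if (?R z \<and> ok ?S) \<and> I c z l then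
          w z (?o z l) / Wg c z * min 1 (pit M U (?o z l) * w (?o z l) z * Wg c z / (pit M U z * w z (?o z l) * Wg' c z))
          else 0)"
        unfolding pr accept_prob_def W using True by simp
    qed
    finally show ?thesis using True by (simp add: mfun_def)
  next
    case False then show ?thesis using l0 by (simp add: mfun_def)
  qed
  have Em': "(\<lambda>z. ennreal (E z)) \<in> borel_measurable borel" using Em by measurable
  have Rm: "{x \<in> space borel. ?R x} \<in> sets borel"
    using condR_meas[OF gc] unfolding pred_def by simp
  show ?thesis unfolding eq[abs_def]
    by (rule measurable_If[OF Em' _ Rm]) simp
qed

lemma mfun_meas: "mfun eps M U gradU K w ok l \<in> borel_measurable borel"
proof (cases "l = 0")
  case False then show ?thesis by (rule mfun_meas_ne)
next
  case True
  let ?R = "condR eps M gradU"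
  let ?m = "mfun eps M U gradU K w ok"
  define g where "g z = (\<integral>\<^sup>+ k. (if k = 0 then 0 else ?m k z) \<partial>count_space UNIV)" for z
  have gm: "g \<in> borel_measurable borel"
    unfolding g_def
    apply (rule borel_measurable_nn_integral_count_int)
    subgoal for k by (cases "k = 0") (simp_all add: mfun_meas_ne)
    done
  have eq: "?m 0 z = (if ?R z then 1 - g z else 1)" for z
  proof (cases "?R z")
    case R: True
    have "1 = emeasure (measure_pmf (gk eps M U gradU K w ok z)) UNIV" by simp
    also have "\<dots> = (\<integral>\<^sup>+ k. ?m k z \<partial>count_space UNIV)"
      using PB[OF wn wp pp, where K=K and ok=ok and z=z and B=UNIV] by simp
    also have "\<dots> = (\<integral>\<^sup>+ k. ?m 0 z * indicator {0} k + (if k = 0 then 0 else ?m k z) \<partial>count_space UNIV)"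
      by (intro nn_integral_cong) (auto split: split_indicator)
    also have "\<dots> = ?m 0 z + g z"
      unfolding g_def by (subst nn_integral_add) (auto simp: nn_integral_cmult_indicator)
    finally have s: "?m 0 z + g z = 1" by (rule sym)
    have gt: "g z \<noteq> \<top>"
    proof
      assume "g z = \<top>" then show False using s by simp
    qed
    have "?m 0 z = (?m 0 z + g z) - g z" using ennreal_add_diff_cancel_right[OF gt, of "?m 0 z"] by simp
    then have "?m 0 z = 1 - g z" using s by simp
    then show ?thesis using R by simp
  next
    case False then show ?thesis by (simp add: mfun_def)
  qed
  have Rm: "{x \<in> space borel. ?R x} \<in> sets borel"
    using condR_meas[OF gc] unfolding pred_def by simp
  have gm': "(\<lambda>z. 1 - g z) \<in> borel_measurable borel" using gm by measurable
  show ?thesis unfolding True eq[abs_def]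
    by (rule measurable_If[OF gm' _ Rm]) simp
qed

end



lemma db_gk:
  fixes eps :: real and K :: nat
    and U :: "real^'n \<Rightarrow> real" and gradU :: "real^'n \<Rightarrow> real^'n"
    and M :: "real^'n^'n"
    and w :: "'n state \<Rightarrow> 'n state \<Rightarrow> real"
  assumes wn: "\<And>z z'. w z z' \<ge> 0"
    and wp: "\<And>z a b. condR eps M gradU z \<Longrightarrow> a \<le> 0 \<Longrightarrow> 0 \<le> b \<Longrightarrow> (\<Sum>z'\<in>segs eps M gradU z a b. w z z') > 0"
    and pp: "\<And>z. pit M U z > 0"
    and gc: "continuous_on UNIV gradU"
    and wm: "(\<lambda>(z, z'). w z z') \<in> borel_measurable borel"
    and pc: "continuous_on UNIV (pit M U)"
    and okm: "\<And>c. Measurable.pred borel (\<lambda>z. condR eps M gradU z \<and> ok (Sc eps M gradU K c z))"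
  shows "detailed_balance (pit_measure M U) (gk eps M U gradU K w ok)"
  unfolding pit_measure_def
proof (rule abstract_db[where T="orbit eps M gradU" and m="mfun eps M U gradU K w ok"])
  show "(\<lambda>z. orbit eps M gradU z l) \<in> borel_measurable borel" for l
    by (rule orbit_measurable[OF gc])
  show "(\<integral>\<^sup>+ z. h (orbit eps M gradU z l) \<partial>lborel) = (\<integral>\<^sup>+ z. h z \<partial>lborel)"
    if "h \<in> borel_measurable borel" for l h
    by (rule nn_integral_orbit[OF gc that])
  show "orbit eps M gradU (orbit eps M gradU z l) (- l) = z" for z l
    by (simp add: orbit_add)
  show "(\<lambda>z. ennreal (pit M U z)) \<in> borel_measurable borel"
    using borel_measurable_continuous_onI[OF pc] by measurable
  show "mfun eps M U gradU K w ok l \<in> borel_measurable borel" for l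
    by (rule mfun_meas[OF wn wp pp gc wm pc okm])
  show "ennreal (pit M U z) * mfun eps M U gradU K w ok l z =
      ennreal (pit M U (orbit eps M gradU z l)) * mfun eps M U gradU K w ok (- l) (orbit eps M gradU z l)" for z l
    by (rule sym_enn[OF wn wp pp])
  show "emeasure (measure_pmf (gk eps M U gradU K w ok z)) B =
     (\<integral>\<^sup>+ l. indicator B (orbit eps M gradU z l) * mfun eps M U gradU K w ok l z \<partial>count_space UNIV)" for z B
    by (rule PB[OF wn wp pp])
qed



lemma max_min_iff:
  fixes H :: "'a \<Rightarrow> real"
  assumes "finite S" "S \<noteq> {}"
  shows "(D \<le> Max (H ` S) - Min (H ` S)) \<longleftrightarrow> (\<exists>x\<in>S. \<exists>y\<in>S. D \<le> H x - H y)"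
proof
  assume a: "D \<le> Max (H ` S) - Min (H ` S)"
  have "Max (H ` S) \<in> H ` S" "Min (H ` S) \<in> H ` S" using assms by auto
  then show "\<exists>x\<in>S. \<exists>y\<in>S. D \<le> H x - H y" using a by force
next
  assume "\<exists>x\<in>S. \<exists>y\<in>S. D \<le> H x - H y"
  then obtain x y where "x \<in> S" "y \<in> S" "D \<le> H x - H y" by blast
  moreover have "H x \<le> Max (H ` S)" "Min (H ` S) \<le> H y" using assms \<open>x \<in> S\<close> \<open>y \<in> S\<close> by auto
  ultimately show "D \<le> Max (H ` S) - Min (H ` S)" by linarith
qed

lemma U_cont:
  assumes "\<And>x. (U has_derivative (\<lambda>h. gradU x \<bullet> h)) (at x)"
  shows "continuous_on UNIV U"
  using assms has_derivative_continuous continuous_at_imp_continuous_on by blast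

lemma Ham_cont:
  assumes "continuous_on UNIV U"
  shows "continuous_on UNIV (Ham M U)"
proof -
  have g: "continuous_on UNIV (\<lambda>z. U (f z))" if "continuous_on UNIV f" for f :: "'z::topological_space \<Rightarrow> _"
    using continuous_on_compose2[OF assms that] by auto
  show ?thesis unfolding Ham_def[abs_def] divide_inverse
    by (intro continuous_intros g bounded_linear.continuous_on[OF matrix_vector_mul_bounded_linear])
qed

lemma pit_cont:
  assumes "continuous_on UNIV U"
  shows "continuous_on UNIV (pit M U)"
proof -
  have g: "continuous_on UNIV (\<lambda>z. U (f z))" if "continuous_on UNIV f" for f :: "'z::topological_space \<Rightarrow> _"
    using continuous_on_compose2[OF assms that] by auto
  show ?thesis unfolding pit_def[abs_def] rho_def divide_inverse
    by (intro continuous_intros g bounded_linear.continuous_on[OF matrix_vector_mul_bounded_linear])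
qed

lemma cut_pred:
  fixes gradU :: "real^'n \<Rightarrow> real^'n"
  assumes gc: "continuous_on UNIV gradU" and uc: "continuous_on UNIV U"
  shows "Measurable.pred borel (\<lambda>z. condR eps M gradU z \<and>
      \<not> (Delta \<le> Max (Ham M U ` Sc eps M gradU K c z) - Min (Ham M U ` Sc eps M gradU K c z)))"
proof -
  let ?R = "condR eps M gradU"
  let ?o = "orbit eps M gradU"
  let ?H = "Ham M U"
  define I where "I z k = (- int c \<le> seg_index eps M gradU z k \<and> seg_index eps M gradU z k \<le> int K - int c)" for z k
  define C where "C = (Delta \<le> Max (?H ` {}) - Min (?H ` {}))"
  note [measurable] = condR_meas[OF gc] orbit_meas[OF gc]
  have Im[measurable]: "Measurable.pred borel (\<lambda>z. I z k)" for k
    unfolding I_def by (rule seg_cond_meas[OF gc])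
  have Hm[measurable]: "?H \<in> borel_measurable borel"
    by (rule borel_measurable_continuous_onI[OF Ham_cont[OF uc]])
  have eq: "(?R z \<and> \<not> (Delta \<le> Max (?H ` Sc eps M gradU K c z) - Min (?H ` Sc eps M gradU K c z)))
     \<longleftrightarrow> (?R z \<and> \<not> ((\<exists>k. I z k) \<and> (\<exists>k1 k2. I z k1 \<and> I z k2 \<and> Delta \<le> ?H (?o z k1) - ?H (?o z k2))
                   \<or> (\<not> (\<exists>k. I z k)) \<and> C))" for z
  proof (cases "?R z")
    case True
    have S: "Sc eps M gradU K c z = ?o z ` {k. I z k}" unfolding Sc_def segs_alt I_def ..
    have fin: "finite (Sc eps M gradU K c z)" unfolding Sc_def by (rule segs_finite'[OF True])
    show ?thesis
    proof (cases "\<exists>k. I z k")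
      case True
      then have ne: "Sc eps M gradU K c z \<noteq> {}" unfolding S by auto
      show ?thesis unfolding max_min_iff[OF fin ne] using True \<open>?R z\<close> unfolding S by auto
    next
      case False
      then have "Sc eps M gradU K c z = {}" unfolding S by auto
      then show ?thesis using False \<open>?R z\<close> unfolding C_def by auto
    qed
  qed simp
  show ?thesis unfolding eq by measurable
qed



lemma db_trivial:
  assumes "\<And>z. pit M U z \<le> 0"
  shows "detailed_balance (pit_measure M U) P"
proof -
  have "(\<lambda>z. ennreal (pit M U z)) = (\<lambda>_. 0)" using assms by (simp add: fun_eq_iff ennreal_eq_0_iff)
  then have "pit_measure M U = null_measure lborel"
    unfolding pit_measure_def by (simp add: null_measure_eq_density)
  then show ?thesis unfolding detailed_balance_def by (simp add: nn_integral_null_measure)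
qed

theorem mainTheorem1:
  fixes eps :: real and K :: nat
    and U :: "real^'n \<Rightarrow> real" and gradU :: "real^'n \<Rightarrow> real^'n"
    and M :: "real^'n^'n"
    and w :: "'n state \<Rightarrow> 'n state \<Rightarrow> real"
  assumes eps_pos: "eps > 0"
    and U_deriv: "\<And>x. (U has_derivative (\<lambda>h. gradU x \<bullet> h)) (at x)"
    and gradU_cont: "continuous_on UNIV gradU"
    and U_norm: "((\<lambda>x. exp (- U x)) has_integral 1) UNIV"
    and M_sym: "transpose M = M"
    and M_pd: "\<And>v. v \<noteq> 0 \<Longrightarrow> v \<bullet> (M *v v) > 0"
    and w_nonneg: "\<And>z z'. w z z' \<ge> 0"
    and w_meas: "(\<lambda>(z, z'). w z z') \<in> borel_measurable borel"
    and w_pos: "\<And>z a b. condR eps M gradU z \<Longrightarrow> a \<le> 0 \<Longrightarrow> 0 \<le> b \<Longrightarrow>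
                  (\<Sum>z'\<in>segs eps M gradU z a b. w z z') > 0"
    and R_ae: "AE z in pit_measure M U. condR eps M gradU z"
  shows "detailed_balance (pit_measure M U) (apogee_kernel eps M U gradU K w)
       \<and> (\<forall>Delta>0. detailed_balance (pit_measure M U) (apogee_kernel_cutoff eps M U gradU K w Delta))"
proof -
  have uc: "continuous_on UNIV U" by (rule U_cont[OF U_deriv])
  have pc: "continuous_on UNIV (pit M U)" by (rule pit_cont[OF uc])
  define D where "D = sqrt ((2 * pi) ^ CARD('n) * det M)"
  show ?thesis
  proof (cases "D > 0")
    case True
    have pp: "pit M U z > 0" for z
      using True unfolding pit_def rho_def D_def[symmetric] by simp
    have ok1: "Measurable.pred borel (\<lambda>z. condR eps M gradU z \<and> (\<lambda>_. True) (Sc eps M gradU K c z))" for c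
      using condR_meas[OF gradU_cont] by simp
    have d1: "detailed_balance (pit_measure M U) (apogee_kernel eps M U gradU K w)"
      unfolding kernel_gk by (rule db_gk[OF w_nonneg w_pos pp gradU_cont w_meas pc ok1])
    have d2: "detailed_balance (pit_measure M U) (apogee_kernel_cutoff eps M U gradU K w Delta)" for Delta
      unfolding kernel_cutoff_gk
      by (rule db_gk[OF w_nonneg w_pos pp gradU_cont w_meas pc cut_pred[OF gradU_cont uc]])
    show ?thesis using d1 d2 by blast
  next
    case False
    have "pit M U z \<le> 0" for z
    proof -
      have "rho M (snd z) \<le> 0" unfolding rho_def D_def[symmetric] using False
        by (intro divide_nonneg_nonpos) auto
      then show ?thesis unfolding pit_def by (simp add: mult_nonneg_nonpos)
    qed
    then show ?thesis using db_trivial by blast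
  qed
qed


end
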